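(* Let $F=\mathrm{F}(1,\langle2\rangle,\mathbb Z[\tfrac12])$, $T=\mathrm{T}(1,\langle2\rangle,\mathbb Z[\tfrac12])$, $V=\mathrm{V}(1,\langle2\rangle,\mathbb Z[\tfrac12])$ (Thompson's groups). Let $x_0,x_1\in F$ be given by $$(t)x_0=\begin{cases}2t,&t\in[0,\tfrac14]\\ t+\tfrac14,&t\in[\tfrac14,\tfrac12]\\ \tfrac t2+\tfrac12,&t\in[\tfrac12,1)\end{cases}\qquad (t)x_1=\begin{cases}t,&t\in[0,\tfrac12]\\ 2t-\tfrac12,&t\in[\tfrac12,\tfrac58]\\ t+\tfrac18,&t\in[\tfrac58,\tfrac34]\\ \tfrac t2+\tfrac12,&t\in[\tfrac34,1)\end{cases}$$ and let $a=x_0^2$, $b=x_1x_0^{-1}x_1^{-1}x_0$ (product of right-acting maps). Then $\langle a,b\rangle=\langle b\rangle\wr\langle a\rangle\cong\mathbb Z\wr\mathbb Z$, and there is a single first-order formula in the group language with parameters from $F$ which defines the subgroup $\langle a,b\rangle$ in each of $F$, $T$ and $V$.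
   Context: $\mathrm{V}(r,\Lambda,A)$ is the group of bijections $x\colon[0,r)\to[0,r)$ that are piecewise affine with finitely many cuts and singular points, right-continuous everywhere, all slopes in $\Lambda$, all cut/singular points and their images in $A$; $\mathrm{F}(r,\Lambda,A)$ is its subgroup of elements continuous in the usual topology, $\mathrm{T}(r,\Lambda,A)$ its subgroup of elements continuous in the circle topology of $[0,r)\cong[0,r]/\{0,r\}$. Maps act on the right: $(t)(xy)=((t)x)y$. $\langle b\rangle\wr\langle a\rangle$ denotes the restricted wreath product: the conjugates $a^{-k}ba^k$ ($k\in\mathbb Z$) generate a free abelian group with basis $(a^{-k}ba^k)_k$, and $\langle a,b\rangle$ is its semidirect product with the infinite cyclic group $\langle a\rangle$. *)

theory Defs
  imports Complex_Main
begin

definition dyadic :: "real \<Rightarrow> bool" where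
  "dyadic x \<longleftrightarrow> (\<exists>m::int. \<exists>n::nat. x = of_int m / 2 ^ n)"

text \<open>Elements are maps real to real which are the identity outside [0,1).
  Maps act on the right: (t)(x y) = ((t)x)y, so the product x y is y o x.\<close>

definition gmul :: "(real \<Rightarrow> real) \<Rightarrow> (real \<Rightarrow> real) \<Rightarrow> (real \<Rightarrow> real)" where
  "gmul x y = y \<circ> x"

definition ginv :: "(real \<Rightarrow> real) \<Rightarrow> (real \<Rightarrow> real)" where
  "ginv x = inv x"

definition gpow :: "(real \<Rightarrow> real) \<Rightarrow> int \<Rightarrow> (real \<Rightarrow> real)" where
  "gpow x n = (if 0 \<le> n then (gmul x ^^ nat n) id else (gmul (ginv x) ^^ nat (- n)) id)"

inductive_set gen_by :: "(real \<Rightarrow> real) set \<Rightarrow> (real \<Rightarrow> real) set" for S where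
  gen_id: "id \<in> gen_by S"
| gen_base: "s \<in> S \<Longrightarrow> s \<in> gen_by S"
| gen_mul: "x \<in> gen_by S \<Longrightarrow> y \<in> gen_by S \<Longrightarrow> gmul x y \<in> gen_by S"
| gen_inv: "x \<in> gen_by S \<Longrightarrow> ginv x \<in> gen_by S"

definition thompsonV :: "(real \<Rightarrow> real) set" where
  "thompsonV = {f.
     (\<forall>t. t \<notin> {0..<1} \<longrightarrow> f t = t) \<and>
     bij_betw f {0..<1} {0..<1} \<and>
     (\<exists>ps :: real list. length ps \<ge> 2 \<and> sorted_wrt (<) ps \<and> hd ps = 0 \<and> last ps = 1 \<and>
        (\<forall>p \<in> set ps. dyadic p) \<and>
        (\<forall>i < length ps - 1. dyadic (f (ps ! i)) \<and>
            (\<exists>k::int. \<exists>c::real. \<forall>t \<in> {ps ! i ..< ps ! (i+1)}. f t = 2 powr (real_of_int k) * t + c)))}"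

definition thompsonF :: "(real \<Rightarrow> real) set" where
  "thompsonF = {f \<in> thompsonV. continuous_on {0..<1} f}"

text \<open>Continuity in the circle topology of [0,1) = [0,1]/{0,1} = R/Z: the induced
  map on the unit circle, pulled back along the quotient map t to exp(2 pi i t), is continuous.\<close>
definition thompsonT :: "(real \<Rightarrow> real) set" where
  "thompsonT = {f \<in> thompsonV. continuous_on UNIV (\<lambda>t. cis (2 * pi * f (frac t)))}"

definition x0 :: "real \<Rightarrow> real" where
  "x0 t = (if t < 0 \<or> 1 \<le> t then t
           else if t \<le> 1/4 then 2 * t
           else if t \<le> 1/2 then t + 1/4
           else t / 2 + 1/2)"

definition x1 :: "real \<Rightarrow> real" where
  "x1 t = (if t < 0 \<or> 1 \<le> t then t
           else if t \<le> 1/2 then t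
           else if t \<le> 5/8 then 2 * t - 1/2
           else if t \<le> 3/4 then t + 1/8
           else t / 2 + 1/2)"

definition ela :: "real \<Rightarrow> real" where
  "ela = gmul x0 x0"

definition elb :: "real \<Rightarrow> real" where
  "elb = gmul (gmul (gmul x1 (ginv x0)) (ginv x1)) x0"

definition bconj :: "int \<Rightarrow> real \<Rightarrow> real" where
  "bconj k = gmul (gmul (gpow ela (- k)) elb) (gpow ela k)"

definition bprod :: "int \<Rightarrow> (int \<Rightarrow> int) \<Rightarrow> real \<Rightarrow> real" where
  "bprod N n = foldr (\<lambda>k acc. gmul (gpow (bconj k) (n k)) acc) [- N..N] id"

datatype gterm = GVar nat | GPar nat | GOne | GMul gterm gterm | GInv gterm

datatype gform = GEq gterm gterm | GNot gform | GAnd gform gform | GEx nat gform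

fun evt :: "(nat \<Rightarrow> real \<Rightarrow> real) \<Rightarrow> (nat \<Rightarrow> real \<Rightarrow> real) \<Rightarrow> gterm \<Rightarrow> real \<Rightarrow> real" where
  "evt ps e (GVar i) = e i"
| "evt ps e (GPar i) = ps i"
| "evt ps e GOne = id"
| "evt ps e (GMul s t) = gmul (evt ps e s) (evt ps e t)"
| "evt ps e (GInv s) = ginv (evt ps e s)"

fun sat :: "(real \<Rightarrow> real) set \<Rightarrow> (nat \<Rightarrow> real \<Rightarrow> real) \<Rightarrow> (nat \<Rightarrow> real \<Rightarrow> real) \<Rightarrow> gform \<Rightarrow> bool" where
  "sat G ps e (GEq s t) = (evt ps e s = evt ps e t)"
| "sat G ps e (GNot \<phi>) = (\<not> sat G ps e \<phi>)"
| "sat G ps e (GAnd \<phi> \<psi>) = (sat G ps e \<phi> \<and> sat G ps e \<psi>)"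
| "sat G ps e (GEx v \<phi>) = (\<exists>g \<in> G. sat G ps (e(v := g)) \<phi>)"

end

theory Submission
  imports Defs
begin


definition tp :: "int \<Rightarrow> real" where "tp i = 2 powr (real_of_int i)"

lemma tp_pos[simp]: "0 < tp i" by (simp add: tp_def)
lemma tp_nonneg[simp]: "0 \<le> tp i" by (simp add: tp_def)
lemma tp_ne0[simp]: "tp i \<noteq> 0" by (simp add: tp_def)
lemma tp_add: "tp (i + j) = tp i * tp j" by (simp add: tp_def powr_add)
lemma tp_0[simp]: "tp 0 = 1" by (simp add: tp_def)
lemma tp_1[simp]: "tp 1 = 2" by (simp add: tp_def)
lemma tp_minus: "tp (- i) = 1 / tp i" by (simp add: tp_def powr_minus divide_inverse)
lemma tp_diff: "tp (i - j) = tp i / tp j" using tp_add[of i "-j"] tp_minus[of j] by simp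
lemma tp_Suc: "tp (i + 1) = 2 * tp i" by (simp add: tp_add)
lemma tp_pred: "tp (i - 1) = tp i / 2" by (simp add: tp_diff)
lemma tp_nat: "tp (int n) = 2 ^ n" by (simp add: tp_def powr_realpow)
lemma tp_mono_iff[simp]: "tp i < tp j \<longleftrightarrow> i < j" by (simp add: tp_def)
lemma tp_mono_le[simp]: "tp i \<le> tp j \<longleftrightarrow> i \<le> j" by (simp add: tp_def)
lemma tp_inj[simp]: "tp i = tp j \<longleftrightarrow> i = j" by (metis order.antisym order_refl tp_mono_le)
lemma tp_lt1_iff[simp]: "tp i < 1 \<longleftrightarrow> i < 0" using tp_mono_iff[of i 0] by simp
lemma tp_le1_iff[simp]: "tp i \<le> 1 \<longleftrightarrow> i \<le> 0" using tp_mono_le[of i 0] by simp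
lemma one_lt_tp_iff[simp]: "1 < tp i \<longleftrightarrow> 0 < i" using tp_mono_iff[of 0 i] by simp
lemma one_le_tp_iff[simp]: "1 \<le> tp i \<longleftrightarrow> 0 \<le> i" using tp_mono_le[of 0 i] by simp
lemma tp_eq1[simp]: "tp i = 1 \<longleftrightarrow> i = 0" using tp_inj[of i 0] by simp
lemma tp_neg_nat: "tp (- int n) = 1 / 2 ^ n" by (simp add: tp_minus tp_nat)
lemma tp_num[simp]: "tp 2 = 4" "tp (-1) = 1/2" "tp (-2) = 1/4" "tp (-3) = 1/8"
  using tp_nat[of 2] tp_neg_nat[of 1] tp_neg_nat[of 2] tp_neg_nat[of 3] by simp_all

lemma tp_small: assumes "0 < d" shows "\<exists>n::nat. tp (- int n) < d"
proof -
  obtain n where "(1/2::real)^n < d" using real_arch_pow_inv[OF assms, of "1/2"] by auto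
  thus ?thesis by (auto simp: tp_neg_nat power_one_over)
qed

lemma tp_small_int: assumes "0 < d" shows "\<exists>K::int. \<forall>i\<le>K. tp i < d"
proof -
  obtain n::nat where "tp (- int n) < d" using tp_small[OF assms] by auto
  thus ?thesis by (intro exI[of _ "- int n"]) (auto intro: le_less_trans[rotated])
qed

lemma dyadic_int[simp]: "dyadic (of_int m)"
  unfolding dyadic_def by (rule exI[of _ m], rule exI[of _ 0]) simp
lemma dyadic_0[simp]: "dyadic 0" using dyadic_int[of 0] by simp
lemma dyadic_1[simp]: "dyadic 1" using dyadic_int[of 1] by simp

lemma dyadic_add: assumes "dyadic x" "dyadic y" shows "dyadic (x + y)"
proof -
  obtain m n m' n' where x: "x = of_int m / 2 ^ n" and y: "y = of_int m' / 2 ^ n'"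
    using assms unfolding dyadic_def by blast
  have "x + y = of_int (m * 2 ^ n' + m' * 2 ^ n) / 2 ^ (n + n')"
    by (simp add: x y field_simps power_add)
  thus ?thesis unfolding dyadic_def by blast
qed

lemma dyadic_mult: assumes "dyadic x" "dyadic y" shows "dyadic (x * y)"
proof -
  obtain m n m' n' where x: "x = of_int m / 2 ^ n" and y: "y = of_int m' / 2 ^ n'"
    using assms unfolding dyadic_def by blast
  have "x * y = of_int (m * m') / 2 ^ (n + n')"
    by (simp add: x y field_simps power_add)
  thus ?thesis unfolding dyadic_def by blast
qed

lemma dyadic_uminus: assumes "dyadic x" shows "dyadic (- x)"
proof -
  obtain m n where x: "x = of_int m / 2 ^ n" using assms unfolding dyadic_def by blast
  have "- x = of_int (- m) / 2 ^ n" by (simp add: x)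
  thus ?thesis unfolding dyadic_def by blast
qed

lemma dyadic_diff: "dyadic x \<Longrightarrow> dyadic y \<Longrightarrow> dyadic (x - y)"
  using dyadic_add[of x "-y"] dyadic_uminus[of y] by simp

lemma dyadic_tp[simp]: "dyadic (tp i)"
proof (cases "0 \<le> i")
  case True
  then obtain n where "i = int n" by (metis nonneg_eq_int)
  thus ?thesis using dyadic_int[of "2^n"] by (simp add: tp_nat)
next
  case False
  then obtain n where "i = - int n" by (intro that[of "nat (-i)"]) simp
  thus ?thesis unfolding dyadic_def by (auto simp: tp_neg_nat intro!: exI[of _ 1] exI[of _ n])
qed

lemma dyadic_divnum[simp]: "dyadic (of_int m / 2 ^ n)" unfolding dyadic_def by blast

lemma dyadic_numeral_frac: "dyadic (numeral a / numeral b) \<Longrightarrow> True" by simp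

lemma gmul_pow_id: "(gmul x ^^ k) id = x ^^ k"
proof (induction k)
  case 0 thus ?case by simp
next
  case (Suc k)
  have "(gmul x ^^ Suc k) id = gmul x ((gmul x ^^ k) id)" by simp
  also have "\<dots> = x ^^ k \<circ> x" using Suc by (simp only: gmul_def[of x "x ^^ k"])
  also have "\<dots> = x ^^ Suc k" by (simp only: funpow_Suc_right)
  finally show ?case .
qed

lemma gpow_alt: "gpow x n = (if 0 \<le> n then x ^^ nat n else inv x ^^ nat (- n))"
  by (simp add: gpow_def gmul_pow_id ginv_def)

lemma gpow_0[simp]: "gpow x 0 = id" by (simp add: gpow_alt)
lemma gpow_1[simp]: "gpow x 1 = x" by (simp add: gpow_alt)
lemma gpow_m1[simp]: "gpow x (-1) = inv x" by (simp add: gpow_alt)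

lemma bij_comp_inv: "bij x \<Longrightarrow> x \<circ> inv x = id" by (rule ext) (simp add: bij_is_surj surj_f_inv_f)
lemma bij_inv_comp: "bij x \<Longrightarrow> inv x \<circ> x = id" by (rule ext) (simp add: bij_is_inj)
lemma bij_comp_inv_pt: "bij x \<Longrightarrow> x (inv x t) = t" by (simp add: bij_is_surj surj_f_inv_f)
lemma bij_inv_comp_pt: "bij x \<Longrightarrow> inv x (x t) = t" by (simp add: bij_is_inj)

lemma gpow_Suc: assumes "bij x" shows "gpow x (n + 1) = x \<circ> gpow x n"
proof (cases "0 \<le> n")
  case True
  hence "nat (n+1) = Suc (nat n)" by simp
  thus ?thesis using True by (simp add: gpow_alt)
next
  case False
  show ?thesis
  proof (cases "n = -1")
    case True thus ?thesis using bij_comp_inv[OF assms] by simp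
  next
    case F2: False
    with False have "nat (-n) = Suc (nat (-(n+1)))" by simp
    hence "inv x ^^ nat (-n) = inv x \<circ> inv x ^^ nat (-(n+1))" by simp
    hence "x \<circ> inv x ^^ nat (-n) = inv x ^^ nat (-(n+1))"
      using bij_comp_inv_pt[OF assms] by (simp add: fun_eq_iff)
    thus ?thesis using False F2 by (simp add: gpow_alt)
  qed
qed

lemma gpow_Suc': assumes "bij x" shows "gpow x (n + 1) = gpow x n \<circ> x"
proof (cases "0 \<le> n")
  case True
  hence "nat (n+1) = Suc (nat n)" by simp
  thus ?thesis using True by (simp add: gpow_alt funpow_Suc_right del: funpow.simps)
next
  case False
  show ?thesis
  proof (cases "n = -1")
    case True thus ?thesis using bij_inv_comp[OF assms] by simp
  next
    case F2: False
    with False have "nat (-n) = Suc (nat (-(n+1)))" by simp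
    hence "inv x ^^ nat (-n) = inv x ^^ nat (-(n+1)) \<circ> inv x" by (simp add: funpow_Suc_right del: funpow.simps)
    hence "inv x ^^ nat (-n) \<circ> x = inv x ^^ nat (-(n+1))"
      using bij_inv_comp[OF assms] by (simp add: comp_assoc)
    thus ?thesis using False F2 by (simp add: gpow_alt)
  qed
qed

lemma gpow_pred: assumes "bij x" shows "gpow x (n - 1) = inv x \<circ> gpow x n"
proof -
  have "gpow x n = x \<circ> gpow x (n - 1)" using gpow_Suc[OF assms, of "n-1"] by simp
  hence "inv x \<circ> gpow x n = (inv x \<circ> x) \<circ> gpow x (n - 1)" by (simp add: comp_assoc)
  thus ?thesis using bij_inv_comp[OF assms] by simp
qed

lemma gpow_add: assumes "bij x" shows "gpow x (m + n) = gpow x m \<circ> gpow x n"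
proof (induction m rule: int_induct[where k=0])
  case base thus ?case by simp
next
  case (step1 i)
  have "gpow x (i + 1 + n) = x \<circ> gpow x (i + n)" using gpow_Suc[OF assms, of "i+n"] by (simp add: ac_simps)
  thus ?case using step1 gpow_Suc[OF assms, of i] by (simp add: comp_assoc)
next
  case (step2 i)
  have "gpow x (i - 1 + n) = inv x \<circ> gpow x (i + n)" using gpow_pred[OF assms, of "i+n"] by (simp add: algebra_simps)
  thus ?case using step2 gpow_pred[OF assms, of i] by (simp add: comp_assoc)
qed

lemma gpow_add_pt: "bij x \<Longrightarrow> gpow x (m + n) t = gpow x m (gpow x n t)"
  by (simp add: gpow_add)

lemma gpow_comm: "bij x \<Longrightarrow> gpow x m \<circ> gpow x n = gpow x n \<circ> gpow x m"
  by (metis add.commute gpow_add)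

lemma gpow_inverse: assumes "bij x" shows "gpow x n \<circ> gpow x (- n) = id" "gpow x (- n) \<circ> gpow x n = id"
  using gpow_add[OF assms, of n "-n"] gpow_add[OF assms, of "-n" n] by simp_all

lemma gpow_bij: assumes "bij x" shows "bij (gpow x n)"
  using gpow_inverse[OF assms, of n] by (metis bij_comp comp_eq_id_dest o_bij)

lemma inv_unique: "f \<circ> g = id \<Longrightarrow> g \<circ> f = id \<Longrightarrow> inv f = g"
  by (metis inv_unique_comp)

lemma gpow_inv: "bij x \<Longrightarrow> inv (gpow x n) = gpow x (- n)"
  using gpow_inverse inv_unique by blast

lemma gpow_fix: assumes "bij x" "x t = t" shows "gpow x n t = t"
proof -
  have "inv x t = t" using assms by (metis bij_inv_comp_pt)
  have "(x ^^ k) t = t" for k by (induction k) (use assms in auto)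
  moreover have "(inv x ^^ k) t = t" for k by (induction k) (use \<open>inv x t = t\<close> in auto)
  ultimately show ?thesis by (simp add: gpow_alt)
qed

lemma gpow_commute: assumes "bij x" "g \<circ> x = x \<circ> g" shows "g \<circ> gpow x n = gpow x n \<circ> g"
proof (induction n rule: int_induct[where k=0])
  case base thus ?case by simp
next
  case (step1 i)
  have "g \<circ> (x \<circ> gpow x i) = (g \<circ> x) \<circ> gpow x i" by (simp add: comp_assoc)
  also have "\<dots> = x \<circ> (g \<circ> gpow x i)" using assms(2) by (simp add: comp_assoc)
  also have "\<dots> = (x \<circ> gpow x i) \<circ> g" by (simp only: step1 comp_assoc)
  finally show ?case unfolding gpow_Suc[OF assms(1)] .
next
  case (step2 i)
  have gi: "g (inv x t) = inv x (g t)" for t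
  proof -
    have "x (g (inv x t)) = g (x (inv x t))" using fun_cong[OF assms(2), of "inv x t"] by simp
    hence "x (g (inv x t)) = g t" using bij_comp_inv_pt[OF assms(1)] by simp
    hence "inv x (x (g (inv x t))) = inv x (g t)" by simp
    thus ?thesis using bij_inv_comp_pt[OF assms(1)] by simp
  qed
  have "g \<circ> inv x = inv x \<circ> g" using gi by auto
  have "g \<circ> (inv x \<circ> gpow x i) = (g \<circ> inv x) \<circ> gpow x i" by (simp add: comp_assoc)
  also have "\<dots> = inv x \<circ> (g \<circ> gpow x i)" using \<open>g \<circ> inv x = inv x \<circ> g\<close> by (simp add: comp_assoc)
  also have "\<dots> = (inv x \<circ> gpow x i) \<circ> g" by (simp only: step2 comp_assoc)
  finally show ?case unfolding gpow_pred[OF assms(1)] .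
qed

lemma gpow_sq: assumes "bij x" shows "gpow (x \<circ> x) n = gpow x (2 * n)"
proof (induction n rule: int_induct[where k=0])
  case base thus ?case by simp
next
  case (step1 i)
  have b: "bij (x \<circ> x)" using assms bij_comp by blast
  have e: "2 * (i+1) = 1 + (1 + 2*i)" by simp
  have "gpow x (2 * (i+1)) = gpow x 1 \<circ> gpow x 1 \<circ> gpow x (2*i)"
    unfolding e gpow_add[OF assms] by (simp add: comp_assoc)
  thus ?case using step1 gpow_Suc[OF b, of i] by (simp only: gpow_1 comp_assoc)
next
  case (step2 i)
  have b: "bij (x \<circ> x)" using assms bij_comp by blast
  have "inv (x \<circ> x) = inv x \<circ> inv x" using assms by (simp add: bij_is_inj bij_is_surj o_inv_distrib)
  moreover have e: "2 * (i-1) = -1 + (-1 + 2*i)" by simp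
  have "gpow x (2 * (i-1)) = gpow x (-1) \<circ> gpow x (-1) \<circ> gpow x (2*i)"
    unfolding e gpow_add[OF assms] by (simp add: comp_assoc)
  ultimately show ?case using step2 gpow_pred[OF b, of i] gpow_m1 by (simp only: comp_assoc)
qed

lemma gpow_conj: assumes "bij x" "bij h"
  shows "gpow (h \<circ> x \<circ> inv h) n = h \<circ> gpow x n \<circ> inv h"
proof (induction n rule: int_induct[where k=0])
  case base thus ?case using bij_comp_inv[OF assms(2)] by simp
next
  case (step1 i)
  have b: "bij (h \<circ> x \<circ> inv h)" using assms by (simp add: bij_comp bij_imp_bij_inv)
  have "h \<circ> x \<circ> inv h \<circ> (h \<circ> gpow x i \<circ> inv h) = h \<circ> (x \<circ> gpow x i) \<circ> inv h"
    using bij_inv_comp_pt[OF assms(2)] by (simp add: fun_eq_iff)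
  thus ?case using step1 gpow_Suc[OF b, of i] gpow_Suc[OF assms(1), of i] by (simp only:)
next
  case (step2 i)
  have b: "bij (h \<circ> x \<circ> inv h)" using assms by (simp add: bij_comp bij_imp_bij_inv)
  have "inv (h \<circ> x \<circ> inv h) = h \<circ> inv x \<circ> inv h"
    by (rule inv_unique) (simp_all add: fun_eq_iff bij_comp_inv_pt bij_inv_comp_pt assms)
  moreover have "h \<circ> inv x \<circ> inv h \<circ> (h \<circ> gpow x i \<circ> inv h) = h \<circ> (inv x \<circ> gpow x i) \<circ> inv h"
    using bij_inv_comp_pt[OF assms(2)] by (simp add: fun_eq_iff)
  ultimately show ?case using step2 gpow_pred[OF b, of i] gpow_pred[OF assms(1), of i] by (simp only:)
qed



definition lK :: "int \<Rightarrow> real" where "lK i = (if i \<le> 1 then tp (i - 2) else 1 - tp (- i))"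
definition eK :: "int \<Rightarrow> int" where "eK i = (if i \<le> 0 then i - 2 else - i - 1)"
definition AK :: "int \<Rightarrow> int \<Rightarrow> real \<Rightarrow> real" where "AK i j t = lK j + (t - lK i) * tp (eK j - eK i)"
definition K :: "int \<Rightarrow> real set" where "K i = {lK i ..< lK (i+1)}"

lemma lK_low: "i \<le> 1 \<Longrightarrow> lK i = tp (i - 2)" by (simp add: lK_def)
lemma lK_high: "1 \<le> i \<Longrightarrow> lK i = 1 - tp (- i)"
  by (cases "i = 1") (auto simp: lK_def)

lemma lK_Suc: "lK (i + 1) = lK i + tp (eK i)"
proof -
  consider "i \<le> 0" | "i = 1" | "i \<ge> 2" by linarith
  thus ?thesis
  proof cases
    case 1
    have "tp (i - 1) = 2 * tp (i - 2)" using tp_Suc[of "i-2"] by simp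
    thus ?thesis using 1 by (simp add: lK_def eK_def)
  next
    case 2 thus ?thesis by (simp add: lK_def eK_def)
  next
    case 3
    have "tp (- i) = 2 * tp (- i - 1)" using tp_Suc[of "-i-1"] by simp
    thus ?thesis using 3 by (simp add: lK_def eK_def)
  qed
qed

lemma lK_pos: "0 < lK i"
proof (cases "i \<le> 1")
  case False
  hence "tp (- i) < tp 0" by simp
  thus ?thesis using False by (simp add: lK_def)
qed (simp add: lK_def)

lemma lK_lt1: "lK i < 1"
proof (cases "i \<le> 1")
  case True
  hence "tp (i - 2) < tp 0" by simp
  thus ?thesis using True by (simp add: lK_def)
qed (simp add: lK_def)

lemma lK_lt_Suc: "lK i < lK (i + 1)" by (simp add: lK_Suc)

lemma lK_mono_nat: "lK i < lK (i + 1 + int d)"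
proof (induction d)
  case 0 thus ?case using lK_lt_Suc by simp
next
  case (Suc d)
  have "lK (i + 1 + int d) < lK (i + 1 + int d + 1)" by (rule lK_lt_Suc)
  thus ?case using Suc by (simp add: add.assoc)
qed

lemma lK_mono: "i < j \<Longrightarrow> lK i < lK j"
  using lK_mono_nat[of i "nat (j - i - 1)"] by simp

lemma lK_less_iff[simp]: "lK i < lK j \<longleftrightarrow> i < j"
proof
  assume a: "lK i < lK j"
  show "i < j"
  proof (rule ccontr)
    assume "\<not> i < j"
    hence "j < i \<or> j = i" by linarith
    thus False using lK_mono[of j i] a by auto
  qed
qed (rule lK_mono)
lemma lK_le_iff[simp]: "lK i \<le> lK j \<longleftrightarrow> i \<le> j"
  using lK_less_iff[of j i] by linarith
lemma lK_eq_iff[simp]: "lK i = lK j \<longleftrightarrow> i = j"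
  using lK_le_iff[of i j] lK_le_iff[of j i] by linarith

lemma K_unique: "t \<in> K i \<Longrightarrow> t \<in> K j \<Longrightarrow> i = j"
proof (rule ccontr)
  assume a: "t \<in> K i" "t \<in> K j" "i \<noteq> j"
  show False
  proof (cases "i < j")
    case True
    hence "lK (i+1) \<le> lK j" by simp
    moreover have "lK j \<le> t" "t < lK (i+1)" using a unfolding K_def by auto
    ultimately show False by linarith
  next
    case False
    hence "lK (j+1) \<le> lK i" using a by simp
    moreover have "lK i \<le> t" "t < lK (j+1)" using a unfolding K_def by auto
    ultimately show False by linarith
  qed
qed

lemma K_sub: "t \<in> K i \<Longrightarrow> 0 < t \<and> t < 1"
  unfolding K_def using lK_pos[of i] lK_lt1[of "i+1"] by auto

lemma K_cover: assumes "0 < t" "t < 1" shows "\<exists>i. t \<in> K i"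
proof (cases "t < 1/2")
  case True
  define f where "f = \<lfloor>log 2 t\<rfloor>"
  have "2 powr f \<le> t \<and> t < 2 powr (f + 1)"
    using floor_log_eq_powr_iff[of t 2 f] assms f_def by simp
  hence h: "tp f \<le> t" "t < tp (f + 1)" by (auto simp: tp_def)
  have "tp f < tp (-1)" using h True tp_num(2) by linarith
  hence "f < -1" by (simp only: tp_mono_iff)
  hence "f + 1 < 0" by simp
  hence "lK (f + 2) = tp f" "lK (f + 2 + 1) = tp (f+1)" by (simp_all add: lK_def)
  thus ?thesis using h unfolding K_def by (intro exI[of _ "f+2"]) simp
next
  case False
  define y where "y = log 2 (1 - t)"
  define c where "c = \<lceil>y\<rceil>"
  have c: "real_of_int c - 1 < y" "y \<le> real_of_int c" unfolding c_def by linarith+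
  have pc: "2 powr y = 1 - t" unfolding y_def using assms by simp
  have h1: "tp (c - 1) < 1 - t" using powr_less_mono[OF c(1), of 2] pc by (simp add: tp_def)
  have h2: "1 - t \<le> tp c" using powr_mono[OF c(2), of 2] pc by (simp add: tp_def)
  have "tp (c - 1) < tp (-1)" using h1 False tp_num(2) by linarith
  hence "c - 1 < -1" by (simp only: tp_mono_iff)
  hence "c \<le> -1" by simp
  hence "lK (- c) = 1 - tp c" "lK (- c + 1) = 1 - tp (c - 1)" by (simp_all add: lK_high)
  thus ?thesis using h1 h2 unfolding K_def by (intro exI[of _ "-c"]) simp
qed

lemma AK_l: "AK i j (lK i) = lK j" by (simp add: AK_def)
lemma AK_id: "AK i i t = t" by (simp add: AK_def)
lemma AK_comp: "AK j k (AK i j t) = AK i k t"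
proof -
  have "tp (eK j - eK i) * tp (eK k - eK j) = tp (eK k - eK i)" by (simp add: tp_add[symmetric])
  thus ?thesis unfolding AK_def by (simp add: algebra_simps)
qed

lemma AK_in: assumes "t \<in> K i" shows "AK i j t \<in> K j"
proof -
  have "lK i \<le> t" "t < lK i + tp (eK i)" using assms lK_Suc[of i] unfolding K_def by auto
  hence "0 \<le> (t - lK i) * tp (eK j - eK i)" "(t - lK i) * tp (eK j - eK i) < tp (eK i) * tp (eK j - eK i)"
    by auto
  moreover have "tp (eK i) * tp (eK j - eK i) = tp (eK j)" by (simp add: tp_add[symmetric])
  ultimately show ?thesis unfolding K_def AK_def using lK_Suc[of j] by auto
qed

lemma AK_inj: "AK i j s = AK i j t \<Longrightarrow> s = t" by (simp add: AK_def)
lemma AK_mono: "s < t \<Longrightarrow> AK i j s < AK i j t" by (simp add: AK_def)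

lemma AK_affine: "AK i j t = tp (eK j - eK i) * t + (lK j - lK i * tp (eK j - eK i))"
  by (simp add: AK_def algebra_simps)

lemma AK_low: assumes "i \<le> 0" "j \<le> 0" shows "AK i j t = tp (j - i) * t"
proof -
  have "lK j = lK i * tp (j - i)" using assms by (simp add: lK_def tp_add[symmetric])
  thus ?thesis using assms by (simp add: AK_affine eK_def)
qed

lemma AK_high: assumes "1 \<le> i" "1 \<le> j" shows "AK i j t = 1 - tp (i - j) * (1 - t)"
proof -
  have "lK i * tp (i - j) = tp (i - j) - tp (- j)" if "i \<ge> 2"
    using assms that by (simp add: lK_def algebra_simps tp_add[symmetric])
  show ?thesis
  proof -
    have e: "eK j - eK i = i - j" using assms by (simp add: eK_def)
    have "lK i = 1 - tp (- i)" "lK j = 1 - tp (- j)" using assms by (auto simp: lK_def)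
    moreover have "tp (- i) * tp (i - j) = tp (- j)" by (simp add: tp_add[symmetric])
    ultimately have "lK i * tp (i - j) = tp (i - j) - tp (- j)"
      by (metis left_diff_distrib mult_1)

    thus ?thesis unfolding AK_affine e using \<open>lK j = 1 - tp (- j)\<close> by (simp add: algebra_simps)
  qed
qed

definition x0i :: "real \<Rightarrow> real" where
  "x0i s = (if s < 0 \<or> 1 \<le> s then s else if s \<le> 1/2 then s / 2 else if s \<le> 3/4 then s - 1/4 else 2 * s - 1)"

lemma x0_x0i: "x0 (x0i s) = s" unfolding x0_def x0i_def by (auto split: if_split_asm simp: field_simps)
lemma x0i_x0: "x0i (x0 t) = t" unfolding x0_def x0i_def by (auto split: if_split_asm simp: field_simps)

lemma bij_x0: "bij x0" by (rule o_bij[where g=x0i]) (auto simp: fun_eq_iff x0_x0i x0i_x0)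
lemma inv_x0: "inv x0 = x0i" by (metis inv_equality x0_x0i x0i_x0)

lemma x0_K: assumes "t \<in> K i" shows "x0 t = AK i (i + 1) t"
proof -
  consider "i \<le> -1" | "i = 0" | "i \<ge> 1" by linarith
  thus ?thesis
  proof cases
    case 1
    hence "t < lK (i + 1)" "lK (i+1) \<le> lK 0" using assms unfolding K_def by auto
    hence "t < 1/4" "0 < t" using K_sub[OF assms] by (auto simp: lK_def)
    thus ?thesis using 1 by (simp add: AK_low x0_def)
  next
    case 2
    hence "1/4 \<le> t" "t < 1/2" using assms unfolding K_def by (auto simp: lK_def)
    thus ?thesis using 2 by (simp add: x0_def AK_def lK_def eK_def)
  next
    case 3
    hence "lK 1 \<le> lK i" by simp
    moreover have "lK i \<le> t" using assms unfolding K_def by auto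
    ultimately have "lK 1 \<le> t" by linarith
    hence "1/2 \<le> t" "t < 1" using K_sub[OF assms] by (auto simp: lK_def)
    moreover have "tp (i - (i+1)) = 1/2" by simp
    ultimately show ?thesis using 3 by (auto simp: AK_high x0_def field_simps)
  qed
qed

lemma x0_fix: "t \<le> 0 \<or> 1 \<le> t \<Longrightarrow> x0 t = t" by (auto simp: x0_def)

lemma x0i_K: assumes "s \<in> K j" shows "inv x0 s = AK j (j - 1) s"
proof -
  have "AK j (j - 1) s \<in> K (j - 1)" using AK_in[OF assms] .
  hence "x0 (AK j (j - 1) s) = s" using x0_K[of _ "j-1"] AK_comp[of "j-1" j j] AK_id by simp
  thus ?thesis using bij_inv_comp_pt[OF bij_x0] by metis
qed

lemma x0pow_K: assumes "t \<in> K i" shows "gpow x0 m t = AK i (i + m) t"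
proof (induction m rule: int_induct[where k=0])
  case base thus ?case by (simp add: AK_id)
next
  case (step1 m)
  have "AK i (i + m) t \<in> K (i + m)" by (rule AK_in[OF assms])
  hence "x0 (AK i (i + m) t) = AK (i+m) (i+m+1) (AK i (i + m) t)" by (rule x0_K)
  thus ?case using step1 gpow_Suc[OF bij_x0, of m] AK_comp by (simp add: add.assoc)
next
  case (step2 m)
  have "AK i (i + m) t \<in> K (i + m)" by (rule AK_in[OF assms])
  hence "inv x0 (AK i (i + m) t) = AK (i+m) (i+m-1) (AK i (i + m) t)" by (rule x0i_K)
  thus ?case using step2 gpow_pred[OF bij_x0, of m] AK_comp by (simp add: add_diff_eq)
qed

lemma x0pow_fix: "t \<le> 0 \<or> 1 \<le> t \<Longrightarrow> gpow x0 m t = t"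
  using gpow_fix[OF bij_x0 x0_fix] by blast

lemma x0pow_01: "0 \<le> t \<Longrightarrow> t < 1 \<Longrightarrow> 0 \<le> gpow x0 m t \<and> gpow x0 m t < 1"
proof -
  assume "0 \<le> t" "t < 1"
  show ?thesis
  proof (cases "t = 0")
    case True thus ?thesis using x0pow_fix[of t m] by simp
  next
    case False
    then obtain i where "t \<in> K i" using K_cover \<open>0 \<le> t\<close> \<open>t < 1\<close> by force
    thus ?thesis using x0pow_K AK_in K_sub by (metis less_eq_real_def)
  qed
qed



lemma continuous_on_eq: "continuous_on s f \<Longrightarrow> (\<And>x. x \<in> s \<Longrightarrow> f x = g x) \<Longrightarrow> continuous_on s g"
  using continuous_on_cong[of s s f g] by blast

lemma dyadic_lK[simp]: "dyadic (lK i)"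
  by (cases "i \<le> 1") (auto simp: lK_low lK_high intro: dyadic_diff)

lemma V_intro:
  fixes f :: "real \<Rightarrow> real" and a b :: int
  assumes out: "\<forall>t. t \<notin> {0..<1} \<longrightarrow> f t = t" and bij: "bij_betw f {0..<1} {0..<1}" and ab: "a \<le> b"
   and p0: "\<exists>k c. \<forall>t\<in>{0..<lK a}. f t = tp k * t + c"
   and pm: "\<And>i. a \<le> i \<Longrightarrow> i < b \<Longrightarrow> \<exists>k c. \<forall>t\<in>K i. f t = tp k * t + c"
   and pl: "\<exists>k c. \<forall>t\<in>{lK b..<1}. f t = tp k * t + c"
   and d0: "dyadic (f 0)" and dK: "\<And>i. a \<le> i \<Longrightarrow> i \<le> b \<Longrightarrow> dyadic (f (lK i))"
  shows "f \<in> thompsonV"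
proof -
  define n where "n = nat (b - a)"
  define ps where "ps = 0 # (map lK [a..b] @ [1])"
  have len: "length (map lK [a..b]) = n + 1" using ab by (simp add: n_def)
  have lenps: "length ps = n + 3" using len by (simp add: ps_def)
  have nth1: "ps ! Suc j = lK (a + int j)" if "j \<le> n" for j
    using that len ab by (simp add: ps_def nth_append n_def)
  have nth2: "ps ! Suc (Suc n) = 1" using len by (simp add: ps_def nth_append)
  have sorted: "sorted_wrt (<) ps"
  proof -
    have "sorted_wrt (<) (map lK [a..b])"
      unfolding sorted_wrt_map by (rule sorted_wrt_mono_rel[OF _ sorted_wrt_upto]) simp
    moreover have "\<forall>x\<in>set (map lK [a..b]). x < 1" using lK_lt1 by auto
    moreover have "\<forall>x\<in>set (map lK [a..b]). 0 < x" using lK_pos by auto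
    ultimately show ?thesis by (simp add: ps_def sorted_wrt_append)
  qed
  have hd: "hd ps = 0" by (simp add: ps_def)
  have last: "last ps = 1" by (simp add: ps_def)
  have dy: "\<forall>p\<in>set ps. dyadic p" by (auto simp: ps_def)
  have pieces: "dyadic (f (ps ! i)) \<and> (\<exists>k::int. \<exists>c::real. \<forall>t \<in> {ps ! i ..< ps ! (i+1)}. f t = 2 powr (real_of_int k) * t + c)"
    if i: "i < length ps - 1" for i
  proof (cases i)
    case 0
    have "ps ! 0 = 0" "ps ! 1 = lK a" using nth1[of 0] by (simp_all add: ps_def)
    thus ?thesis using 0 p0 d0 by (simp add: tp_def)
  next
    case (Suc j)
    hence j: "j \<le> n" using i lenps by simp
    have pj: "ps ! i = lK (a + int j)" using nth1[OF j] Suc by simp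
    show ?thesis
    proof (cases "j < n")
      case True
      have "ps ! (i + 1) = lK (a + int j + 1)" using nth1[of "Suc j"] True Suc by simp
      moreover obtain k c where "\<forall>t\<in>K (a + int j). f t = tp k * t + c"
        using pm[of "a + int j"] True n_def by fastforce
      moreover have "a + int j \<le> b" using True n_def by linarith
      hence "dyadic (f (ps ! i))" using pj dK[of "a + int j"] by simp
      ultimately show ?thesis using pj unfolding K_def tp_def by auto
    next
      case False
      hence "j = n" using j by simp
      hence "ps ! (i + 1) = 1" "ps ! i = lK b" using nth2 Suc pj n_def ab by simp_all
      moreover have "dyadic (f (lK b))" using dK[of b] ab by simp
      ultimately show ?thesis using pl unfolding tp_def by simp
    qed
  qed
  show ?thesis unfolding thompsonV_def
    using out bij lenps sorted hd last dy pieces by (intro CollectI conjI exI[of _ ps]) auto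
qed

lemma x0pow_bij01: "bij_betw (gpow x0 m) {0..<1} {0..<1}"
proof (rule bij_betw_byWitness[where f'="gpow x0 (-m)"])
  show "\<forall>a\<in>{0..<1}. gpow x0 (- m) (gpow x0 m a) = a"
    using gpow_inverse(2)[OF bij_x0, of m] by (metis comp_apply id_apply)
  show "\<forall>a\<in>{0..<1}. gpow x0 m (gpow x0 (- m) a) = a"
    using gpow_inverse(1)[OF bij_x0, of m] by (metis comp_apply id_apply)
  show "gpow x0 m ` {0..<1} \<subseteq> {0..<1}" "gpow x0 (- m) ` {0..<1} \<subseteq> {0..<1}"
    using x0pow_01 by auto
qed

lemma K_index_lt: "t \<in> K i \<Longrightarrow> t < lK j \<Longrightarrow> i < j"
  unfolding K_def by (metis atLeastLessThan_iff lK_less_iff order.strict_trans1)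
lemma K_index_ge: "t \<in> K i \<Longrightarrow> lK j \<le> t \<Longrightarrow> j \<le> i"
proof -
  assume "t \<in> K i" "lK j \<le> t"
  moreover have "t < lK (i+1)" using \<open>t \<in> K i\<close> unfolding K_def by auto
  ultimately have "lK j < lK (i+1)" by linarith
  thus "j \<le> i" by simp
qed

lemma x0pow_V: "gpow x0 m \<in> thompsonV"
proof -
  define M where "M = \<bar>m\<bar> + 1"
  show ?thesis
  proof (rule V_intro[where a="-M" and b=M])
    show "\<forall>t. t \<notin> {0..<1} \<longrightarrow> gpow x0 m t = t" using x0pow_fix by auto
    show "bij_betw (gpow x0 m) {0..<1} {0..<1}" by (rule x0pow_bij01)
    show "-M \<le> M" by (simp add: M_def)
    show "\<exists>k c. \<forall>t\<in>{0..<lK (-M)}. gpow x0 m t = tp k * t + c"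
    proof (intro exI[of _ m] exI[of _ 0] ballI)
      fix t assume t: "t \<in> {0..<lK (-M)}"
      show "gpow x0 m t = tp m * t + 0"
      proof (cases "t = 0")
        case True thus ?thesis using x0pow_fix[of t m] by simp
      next
        case False
        hence "0 < t" "t < 1" using t lK_lt1[of "-M"] by auto
        then obtain i where i: "t \<in> K i" using K_cover by blast
        hence "i < - M" using K_index_lt t by auto
        hence "i \<le> 0" "i + m \<le> 0" by (auto simp: M_def)
        thus ?thesis using x0pow_K[OF i] AK_low by simp
      qed
    qed
    show "\<exists>k c. \<forall>t\<in>K i. gpow x0 m t = tp k * t + c" for i
      by (intro exI[of _ "eK (i+m) - eK i"] exI[of _ "lK (i+m) - lK i * tp (eK (i+m) - eK i)"] ballI)
         (simp add: x0pow_K AK_affine)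
    show "\<exists>k c. \<forall>t\<in>{lK M..<1}. gpow x0 m t = tp k * t + c"
    proof (intro exI[of _ "-m"] exI[of _ "1 - tp (-m)"] ballI)
      fix t assume t: "t \<in> {lK M..<1}"
      hence "0 < t" "t < 1" using lK_pos[of M] by auto
      then obtain i where i: "t \<in> K i" using K_cover by blast
      hence "M \<le> i" using K_index_ge t by auto
      hence "1 \<le> i" "1 \<le> i + m" by (auto simp: M_def)
      hence "AK i (i+m) t = 1 - tp (-m) * (1-t)" using AK_high[of i "i+m" t] by simp
      thus "gpow x0 m t = tp (-m) * t + (1 - tp (-m))" using x0pow_K[OF i]
        by (simp add: algebra_simps)
    qed
    show "dyadic (gpow x0 m 0)" using x0pow_fix[of 0 m] by simp
    show "dyadic (gpow x0 m (lK i))" for i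
    proof -
      have "lK i \<in> K i" unfolding K_def by simp
      thus ?thesis using x0pow_K AK_l by simp
    qed
  qed
qed

lemma x0_min: "0 \<le> t \<Longrightarrow> t < 1 \<Longrightarrow> x0 t = min (2*t) (min (t + 1/4) (t/2 + 1/2))"
  by (auto simp: x0_def min_def)
lemma x0i_max: "0 \<le> t \<Longrightarrow> t < 1 \<Longrightarrow> x0i t = max (t/2) (max (t - 1/4) (2*t - 1))"
  by (auto simp: x0i_def max_def)

lemma cont_x0: "continuous_on {0..<1} x0"
proof -
  have "continuous_on {0..<1} (\<lambda>t::real. min (2*t) (min (t + 1/4) (t/2 + 1/2)))"
    by (intro continuous_intros) auto
  thus ?thesis by (rule continuous_on_eq) (simp add: x0_min)
qed

lemma cont_x0i: "continuous_on {0..<1} x0i"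
proof -
  have "continuous_on {0..<1} (\<lambda>t::real. max (t/2) (max (t - 1/4) (2*t - 1)))"
    by (intro continuous_intros) auto
  thus ?thesis by (rule continuous_on_eq) (simp add: x0i_max)
qed

lemma funpow_cont: assumes "continuous_on S f" "f ` S \<subseteq> S"
  shows "continuous_on S (f ^^ n) \<and> (f ^^ n) ` S \<subseteq> S"
proof (induction n)
  case 0 thus ?case by (simp add: continuous_on_id)
next
  case (Suc n)
  have "continuous_on S (f \<circ> f ^^ n)"
    by (rule continuous_on_compose) (use Suc assms continuous_on_subset in blast)+
  thus ?case using Suc assms by auto
qed

lemma x0_01: "x0 ` {0..<1} \<subseteq> {0..<1}" by (auto simp: x0_def)
lemma x0i_01: "x0i ` {0..<1} \<subseteq> {0..<1}" by (auto simp: x0i_def)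

lemma x0pow_cont: "continuous_on {0..<1} (gpow x0 m)"
  using funpow_cont[OF cont_x0 x0_01] funpow_cont[OF cont_x0i x0i_01]
  by (simp add: gpow_alt inv_x0)

lemma x0pow_F: "gpow x0 m \<in> thompsonF"
  unfolding thompsonF_def using x0pow_V x0pow_cont by simp

lemma x0_F: "x0 \<in> thompsonF" using x0pow_F[of 1] by simp

subsection \<open>circle continuity\<close>

lemma periodic_cont:
  fixes \<phi> :: "real \<Rightarrow> real"
  assumes c: "continuous_on {0..1} \<phi>" and e: "\<phi> 0 = \<phi> 1"
  shows "continuous_on UNIV (\<lambda>t. \<phi> (frac t))"
proof -
  have loc: "continuous_on {of_int n - 1 <..< of_int n + 1} (\<lambda>t. \<phi> (frac t))" for n :: int
  proof -
    have l: "continuous_on {of_int n - 1 .. of_int n} (\<lambda>t. \<phi> (frac t))"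
    proof -
      have "continuous_on {of_int n - 1 .. of_int n} (\<lambda>t. \<phi> (t - (of_int n - 1)))"
        by (rule continuous_on_compose2[OF c]) (auto intro!: continuous_intros)
      moreover have "\<phi> (t - (of_int n - 1)) = \<phi> (frac t)" if "t \<in> {of_int n - 1 .. of_int n}" for t
      proof (cases "t = of_int n")
        case True thus ?thesis using e by simp
      next
        case False
        hence "\<lfloor>t\<rfloor> = n - 1" using that by (intro floor_unique) auto
        thus ?thesis by (simp add: frac_def)
      qed
      ultimately show ?thesis by (rule continuous_on_eq) auto
    qed
    have r: "continuous_on {of_int n .. of_int n + 1} (\<lambda>t. \<phi> (frac t))"
    proof -
      have "continuous_on {of_int n .. of_int n + 1} (\<lambda>t. \<phi> (t - of_int n))"
        by (rule continuous_on_compose2[OF c]) (auto intro!: continuous_intros)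
      moreover have "\<phi> (t - of_int n) = \<phi> (frac t)" if "t \<in> {of_int n .. of_int n + 1}" for t
      proof (cases "t = of_int n + 1")
        case True thus ?thesis using e by simp
      next
        case False
        hence "\<lfloor>t\<rfloor> = n" using that by (intro floor_unique) auto
        thus ?thesis by (simp add: frac_def)
      qed
      ultimately show ?thesis by (rule continuous_on_eq) auto
    qed
    have "continuous_on ({of_int n - 1 .. of_int n} \<union> {of_int n .. of_int n + 1}) (\<lambda>t. \<phi> (frac t))"
      by (rule continuous_on_closed_Un[OF _ _ l r]) auto
    thus ?thesis by (rule continuous_on_subset) auto
  qed
  have "UNIV = (\<Union>n\<in>(UNIV::int set). {of_int n - 1 <..< of_int n + 1::real})"
  proof (safe)
    fix t :: real
    show "t \<in> (\<Union>n. {of_int n - 1 <..< of_int n + 1})"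
      by (rule UN_I[of "\<lfloor>t\<rfloor>"]) (auto, linarith+)
  qed auto
  moreover have "continuous_on (\<Union>n\<in>(UNIV::int set). {of_int n - 1 <..< of_int n + 1::real}) (\<lambda>t. \<phi> (frac t))"
    by (rule continuous_on_open_UN) (auto intro: loc)
  ultimately show ?thesis by simp
qed

definition islift :: "(real \<Rightarrow> real) \<Rightarrow> (real \<Rightarrow> real) \<Rightarrow> bool" where
  "islift L f \<longleftrightarrow> continuous_on UNIV L \<and> (\<forall>t. frac (L t) = f (frac t))"

lemma frac_add_int: "0 \<le> y \<Longrightarrow> y < 1 \<Longrightarrow> frac (of_int k + y) = y"
proof -
  assume "0 \<le> y" "y < 1"
  hence "\<lfloor>of_int k + y\<rfloor> = k" by (intro floor_unique) auto
  thus ?thesis by (simp add: frac_def)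
qed

lemma islift_comp: assumes "islift L1 f1" "islift L2 f2" shows "islift (L2 \<circ> L1) (f2 \<circ> f1)"
proof -
  have "continuous_on UNIV (L2 \<circ> L1)"
    by (rule continuous_on_compose) (use assms in \<open>auto simp: islift_def intro: continuous_on_subset\<close>)
  thus ?thesis using assms by (simp add: islift_def)
qed

lemma islift_funpow: "islift L f \<Longrightarrow> islift (L ^^ n) (f ^^ n)"
proof (induction n)
  case 0 thus ?case by (simp add: islift_def continuous_on_id)
next
  case (Suc n)
  thus ?case using islift_comp[of L f "L ^^ n" "f ^^ n"] by (simp only: funpow_Suc_right)
qed

lemma islift_T: assumes "islift L f" shows "continuous_on UNIV (\<lambda>t. cis (2 * pi * f (frac t)))"
proof -
  have "cis (2 * pi * f (frac t)) = cis (2 * pi * L t)" for t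
  proof -
    have "f (frac t) = L t - of_int \<lfloor>L t\<rfloor>" using assms unfolding islift_def frac_def by metis
    hence "2 * pi * f (frac t) = 2 * pi * L t - 2 * pi * of_int \<lfloor>L t\<rfloor>" by (simp add: right_diff_distrib)
    moreover have "cis (2 * pi * of_int \<lfloor>L t\<rfloor>) = 1" by simp
    ultimately show ?thesis by (simp add: cis_divide[symmetric])
  qed
  moreover have "continuous_on UNIV (\<lambda>t. cis (2 * pi * L t))"
    using assms unfolding islift_def by (intro continuous_intros) auto
  ultimately show ?thesis by simp
qed

definition L0 :: "real \<Rightarrow> real" where "L0 t = t + min (frac t) (min (1/4) ((1 - frac t)/2))"
definition L1 :: "real \<Rightarrow> real" where "L1 t = t - min (frac t / 2) (min (1/4) (1 - frac t))"

lemma islift_L0: "islift L0 x0"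
proof -
  have "continuous_on UNIV (\<lambda>t::real. min (frac t) (min (1/4) ((1 - frac t)/2)))"
    by (rule periodic_cont[where \<phi>="\<lambda>s::real. min s (min (1/4) ((1 - s)/2))", simplified])
       (auto intro!: continuous_intros)
  hence "continuous_on UNIV L0" unfolding L0_def by (intro continuous_on_add continuous_on_id)
  moreover have "frac (L0 t) = x0 (frac t)" for t
  proof -
    have "L0 t = of_int \<lfloor>t\<rfloor> + (frac t + min (frac t) (min (1/4) ((1 - frac t)/2)))"
      by (simp add: L0_def frac_def)
    moreover have "frac t + min (frac t) (min (1/4) ((1 - frac t)/2)) = x0 (frac t)"
    proof -
      have "s + min s (min (1/4) ((1 - s)/2)) = x0 s" if "0 \<le> s" "s < 1" for s::real
        using that by (auto simp: x0_def min_def field_simps)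
      thus ?thesis using frac_lt_1[of t] frac_ge_0[of t] by blast
    qed
    moreover have "frac t \<in> {0..<1}" by (intro atLeastLessThan_iff[THEN iffD2] conjI frac_ge_0 frac_lt_1)
    hence "x0 (frac t) \<in> {0..<1}" using x0_01 by blast
    hence "0 \<le> x0 (frac t)" "x0 (frac t) < 1" by auto
    ultimately show ?thesis by (simp add: frac_add_int)
  qed
  ultimately show ?thesis by (simp add: islift_def)
qed

lemma islift_L1: "islift L1 x0i"
proof -
  have "continuous_on UNIV (\<lambda>t::real. min (frac t / 2) (min (1/4) (1 - frac t)))"
    by (rule periodic_cont[where \<phi>="\<lambda>s::real. min (s/2) (min (1/4) (1 - s))", simplified])
       (auto intro!: continuous_intros)
  hence "continuous_on UNIV L1" unfolding L1_def by (intro continuous_on_diff continuous_on_id)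
  moreover have "frac (L1 t) = x0i (frac t)" for t
  proof -
    have "L1 t = of_int \<lfloor>t\<rfloor> + (frac t - min (frac t / 2) (min (1/4) (1 - frac t)))"
      by (simp add: L1_def frac_def)
    moreover have "frac t - min (frac t / 2) (min (1/4) (1 - frac t)) = x0i (frac t)"
    proof -
      have "s - min (s / 2) (min (1/4) (1 - s)) = x0i s" if "0 \<le> s" "s < 1" for s::real
        using that by (auto simp: x0i_def min_def field_simps)
      thus ?thesis using frac_lt_1[of t] frac_ge_0[of t] by blast
    qed
    moreover have "frac t \<in> {0..<1}" by (intro atLeastLessThan_iff[THEN iffD2] conjI frac_ge_0 frac_lt_1)
    hence "x0i (frac t) \<in> {0..<1}" using x0i_01 by blast
    hence "0 \<le> x0i (frac t)" "x0i (frac t) < 1" by auto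
    ultimately show ?thesis by (simp add: frac_add_int)
  qed
  ultimately show ?thesis by (simp add: islift_def)
qed

lemma x0pow_T: "gpow x0 m \<in> thompsonT"
proof -
  have "\<exists>L. islift L (gpow x0 m)"
    using islift_funpow[OF islift_L0] islift_funpow[OF islift_L1]
    by (auto simp: gpow_alt inv_x0)
  then obtain L where "islift L (gpow x0 m)" by blast
  thus ?thesis unfolding thompsonT_def using x0pow_V islift_T by blast
qed



lemma dyadic_frac: "dyadic (of_int m / 2 ^ n)" by (rule dyadic_divnum)
lemma dyadic_consts[simp]: "dyadic (1/2)" "dyadic (1/4)" "dyadic (3/4)" "dyadic (5/8)" "dyadic (7/8)" "dyadic (1/8)"
  using dyadic_frac[of 1 1] dyadic_frac[of 1 2] dyadic_frac[of 3 2] dyadic_frac[of 5 3] dyadic_frac[of 7 3] dyadic_frac[of 1 3]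
  by simp_all

definition x1i :: "real \<Rightarrow> real" where
  "x1i s = (if s < 0 \<or> 1 \<le> s then s else if s \<le> 1/2 then s else if s \<le> 3/4 then (s + 1/2) / 2
            else if s \<le> 7/8 then s - 1/8 else 2 * s - 1)"

lemma x1_x1i: "x1 (x1i s) = s" unfolding x1_def x1i_def by (auto split: if_split_asm simp: field_simps)
lemma x1i_x1: "x1i (x1 t) = t" unfolding x1_def x1i_def by (auto split: if_split_asm simp: field_simps)
lemma bij_x1: "bij x1" by (rule o_bij[where g=x1i]) (auto simp: fun_eq_iff x1_x1i x1i_x1)
lemma inv_x1: "inv x1 = x1i" by (metis inv_equality x1_x1i x1i_x1)

lemma x1_max: "0 \<le> t \<Longrightarrow> t < 1 \<Longrightarrow> x1 t = max t (min (2*t - 1/2) (min (t + 1/8) (t/2 + 1/2)))"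
  by (auto simp: x1_def min_def max_def)

lemma x1_F: "x1 \<in> thompsonF"
proof -
  have out: "\<forall>t. t \<notin> {0..<1} \<longrightarrow> x1 t = t" by (auto simp: x1_def)
  have bij: "bij_betw x1 {0..<1} {0..<1}"
    by (rule bij_betw_byWitness[where f'=x1i]) (auto simp: x1_x1i x1i_x1, auto simp: x1_def x1i_def)
  define ps :: "real list" where "ps = [0, 1/2, 5/8, 3/4, 1]"
  have pieces: "dyadic (x1 (ps ! i)) \<and> (\<exists>k::int. \<exists>c::real. \<forall>t \<in> {ps ! i ..< ps ! (i+1)}. x1 t = 2 powr (real_of_int k) * t + c)"
    if "i < 4" for i
  proof -
    have "i = 0 \<or> i = 1 \<or> i = 2 \<or> i = 3" using that by auto
    thus ?thesis
    proof (elim disjE)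
      assume "i = 0" thus ?thesis by (auto simp: ps_def x1_def intro!: exI[of _ 0] exI[of _ 0])
    next
      assume "i = 1" thus ?thesis
        by (auto simp: ps_def x1_def intro!: exI[of _ 1] exI[of _ "-1/2"])
    next
      assume "i = 2" thus ?thesis
        by (auto simp: ps_def x1_def intro!: exI[of _ 0] exI[of _ "1/8"])
    next
      assume i: "i = 3"
      have "2 powr real_of_int (-1::int) = 1/2" by (simp add: powr_minus)
      thus ?thesis using i
        by (auto simp: ps_def x1_def intro!: exI[of _ "-1"] exI[of _ "1/2"])
    qed
  qed
  have "x1 \<in> thompsonV" unfolding thompsonV_def
    using out bij pieces by (intro CollectI conjI exI[of _ ps]) (auto simp: ps_def)
  moreover have "continuous_on {0..<1} x1"
  proof -
    have "continuous_on {0..<1} (\<lambda>t::real. max t (min (2*t - 1/2) (min (t + 1/8) (t/2 + 1/2))))"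
      by (intro continuous_intros) auto
    thus ?thesis by (rule continuous_on_eq) (simp add: x1_max)
  qed
  ultimately show ?thesis by (simp add: thompsonF_def)
qed

definition bF :: "real \<Rightarrow> real" where
  "bF t = (if 1/2 < t \<and> t \<le> 5/8 then 2 * t - 1/2 else if 5/8 < t \<and> t < 7/8 then t / 2 + 7/16 else t)"
definition bFi :: "real \<Rightarrow> real" where
  "bFi s = (if 1/2 < s \<and> s \<le> 3/4 then (s + 1/2) / 2 else if 3/4 < s \<and> s < 7/8 then 2 * s - 7/8 else s)"

lemma bF_bFi: "bF (bFi s) = s" unfolding bF_def bFi_def by (auto split: if_split_asm simp: field_simps)
lemma bFi_bF: "bFi (bF t) = t" unfolding bF_def bFi_def by (auto split: if_split_asm simp: field_simps)

lemma elb_eq: "elb = bF"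
proof
  fix t
  have "elb t = x0 (x1i (x0i (x1 t)))"
    by (simp add: elb_def gmul_def ginv_def inv_x0 inv_x1)
  also have "\<dots> = bF t"
    unfolding x0_def x1i_def x0i_def x1_def bF_def by (auto split: if_split_asm simp: field_simps)
  finally show "elb t = bF t" .
qed



definition P :: "int \<Rightarrow> real \<Rightarrow> real" where "P k = gpow ela k"
definition pD :: "int \<Rightarrow> real" where "pD k = lK (2 * k + 1)"
definition D :: "int \<Rightarrow> real set" where "D k = {pD k <..< pD (k + 1)}"

lemma ela_eq: "ela = x0 \<circ> x0" by (simp add: ela_def gmul_def)
lemma P_x0: "P k = gpow x0 (2 * k)" by (simp add: P_def ela_eq gpow_sq bij_x0)
lemma bij_ela: "bij ela" by (simp add: ela_eq bij_comp bij_x0)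
lemma P_add: "P (m + n) = P m \<circ> P n" by (simp add: P_def gpow_add bij_ela)
lemma P_add_pt: "P (m + n) t = P m (P n t)" by (simp add: P_add)
lemma P_0[simp]: "P 0 = id" by (simp add: P_def)
lemma P_inv_pt: "P k (P (- k) t) = t" "P (- k) (P k t) = t"
  using P_add_pt[of k "-k" t] P_add_pt[of "-k" k t] by simp_all
lemma bij_P: "bij (P k)" by (simp add: P_def gpow_bij bij_ela)
lemma inv_P: "inv (P k) = P (- k)" by (simp add: P_def gpow_inv bij_ela)
lemma P_K: "t \<in> K i \<Longrightarrow> P k t = AK i (i + 2 * k) t" by (simp add: P_x0 x0pow_K)
lemma P_fix: "t \<le> 0 \<or> 1 \<le> t \<Longrightarrow> P k t = t" by (simp add: P_x0 x0pow_fix)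
lemma P_inj: "P k s = P k t \<Longrightarrow> s = t" by (metis P_inv_pt(2))

lemma lK_in_K: "lK i \<in> K i" by (simp add: K_def)

lemma P_pD: "P k (pD j) = pD (j + k)"
proof -
  have "P k (lK (2*j+1)) = AK (2*j+1) (2*j+1 + 2*k) (lK (2*j+1))" by (rule P_K[OF lK_in_K])
  also have "\<dots> = lK (2*(j+k)+1)" by (simp add: AK_l algebra_simps)
  finally show ?thesis by (simp add: pD_def)
qed

lemma pD_less_iff[simp]: "pD i < pD j \<longleftrightarrow> i < j" unfolding pD_def lK_less_iff by linarith
lemma pD_le_iff[simp]: "pD i \<le> pD j \<longleftrightarrow> i \<le> j" unfolding pD_def lK_le_iff by linarith
lemma pD_eq_iff[simp]: "pD i = pD j \<longleftrightarrow> i = j" by (simp add: pD_def)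
lemma pD_pos: "0 < pD k" by (simp add: pD_def lK_pos)
lemma pD_lt1: "pD k < 1" by (simp add: pD_def lK_lt1)
lemma pD0: "pD 0 = 1/2" by (simp add: pD_def lK_low)
lemma pD1: "pD 1 = 7/8" by (simp add: pD_def lK_high)

lemma D_sub: "t \<in> D k \<Longrightarrow> 0 < t \<and> t < 1"
  using pD_pos[of k] pD_lt1[of "k+1"] by (auto simp: D_def)

lemma D_K: "t \<in> D j \<longleftrightarrow> (t \<in> K (2*j+1) \<and> t \<noteq> lK (2*j+1)) \<or> t \<in> K (2*j+2)"
proof -
  have "lK (2*j+1) < lK (2*j+2)" "lK (2*j+2) < lK (2*j+3)" by simp_all
  moreover have "pD (j+1) = lK (2*j+3)" by (simp add: pD_def algebra_simps)
  ultimately show ?thesis unfolding D_def K_def pD_def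
    by (auto simp: algebra_simps simp del: lK_less_iff lK_le_iff)
qed

lemma D_unique: "t \<in> D j \<Longrightarrow> t \<in> D k \<Longrightarrow> j = k"
proof (rule ccontr)
  assume a: "t \<in> D j" "t \<in> D k" "j \<noteq> k"
  show False
  proof (cases "j < k")
    case True
    hence "pD (j+1) \<le> pD k" by simp
    moreover have "t < pD (j+1)" "pD k < t" using a unfolding D_def by auto
    ultimately show False by linarith
  next
    case False
    hence "pD (k+1) \<le> pD j" using a by simp
    moreover have "t < pD (k+1)" "pD j < t" using a unfolding D_def by auto
    ultimately show False by linarith
  qed
qed

lemma pD_notin_D: "pD j \<notin> D k"
proof
  assume "pD j \<in> D k"
  hence "pD k < pD j" "pD j < pD (k+1)" by (auto simp: D_def)
  hence "k < j" "j < k + 1" by simp_all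
  thus False by simp
qed

lemma D_cover: assumes "0 < t" "t < 1" "\<forall>k. t \<noteq> pD k" shows "\<exists>k. t \<in> D k"
proof -
  obtain i where i: "t \<in> K i" using K_cover assms by blast
  define k where "k = (i - 1) div 2"
  have "i = 2*k+1 \<or> i = 2*k+2" unfolding k_def by presburger
  moreover have "t \<noteq> lK (2*k+1)" using assms(3) by (simp add: pD_def)
  ultimately show ?thesis using i D_K by blast
qed

lemma P_D: assumes "t \<in> D j" shows "P k t \<in> D (j + k)"
proof -
  have eq: "2 * (j + k) + 1 = 2 * j + 1 + 2 * k" "2 * (j + k) + 2 = 2 * j + 2 + 2 * k" by simp_all
  from assms[unfolded D_K] show ?thesis
  proof (elim disjE conjE)
    assume t: "t \<in> K (2*j+1)" "t \<noteq> lK (2*j+1)"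
    have "P k t = AK (2*j+1) (2*j+1+2*k) t" by (rule P_K[OF t(1)])
    moreover have "AK (2*j+1) (2*j+1+2*k) t \<noteq> lK (2*j+1+2*k)"
      using t(2) AK_l[of "2*j+1" "2*j+1+2*k"] AK_inj by metis
    ultimately show ?thesis using AK_in[OF t(1)] unfolding D_K eq by simp
  next
    assume t: "t \<in> K (2*j+2)"
    show ?thesis using P_K[OF t] AK_in[OF t] unfolding D_K eq by simp
  qed
qed

lemma P_D_iff: "P k t \<in> D (j + k) \<longleftrightarrow> t \<in> D j"
  using P_D[of t j k] P_D[of "P k t" "j+k" "-k"] P_inv_pt(2)[of k t] by auto

lemma P_D_iff': "P k t \<in> D j \<longleftrightarrow> t \<in> D (j - k)"
  using P_D_iff[of k t "j - k"] by simp

lemma D0: "D 0 = {1/2 <..< 7/8}" by (simp add: D_def pD0 pD1)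

lemma bij_bF: "bij bF" by (rule o_bij[where g=bFi]) (auto simp: fun_eq_iff bF_bFi bFi_bF)
lemma inv_bF: "inv bF = bFi" by (metis inv_equality bF_bFi bFi_bF)
lemma bF_fix: "t \<notin> D 0 \<Longrightarrow> bF t = t" by (auto simp: D0 bF_def)
lemma bF_D: "t \<in> D 0 \<Longrightarrow> bF t \<in> D 0" by (auto simp: D0 bF_def)
lemma bFi_D: "t \<in> D 0 \<Longrightarrow> bFi t \<in> D 0" by (auto simp: D0 bFi_def)
lemma bF_moves: "t \<in> D 0 \<Longrightarrow> bF t \<noteq> t" by (auto simp: D0 bF_def)

lemma bpow_fix: "t \<notin> D 0 \<Longrightarrow> gpow bF n t = t"
  by (rule gpow_fix[OF bij_bF bF_fix])

lemma bpow_D: assumes "t \<in> D 0" shows "gpow bF n t \<in> D 0"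
proof -
  have "(bF ^^ k) t \<in> D 0" for k by (induction k) (auto simp: assms bF_D)
  moreover have "(bFi ^^ k) t \<in> D 0" for k by (induction k) (auto simp: assms bFi_D)
  ultimately show ?thesis by (simp add: gpow_alt inv_bF)
qed

lemma tp_negSuc: "tp (- int (Suc k)) = tp (- int k) / 2"
proof -
  have e: "- int (Suc k) = - int k - 1" by simp
  show ?thesis unfolding e by (rule tp_pred)
qed

lemma bpow_germ: assumes "0 \<le> s" "s < tp (- \<bar>n\<bar>) / 8" shows "gpow bF n (1/2 + s) = 1/2 + tp n * s"
proof (cases "0 \<le> n")
  case True
  have "\<forall>s. 0 \<le> s \<and> s \<le> tp (- int k) / 8 \<longrightarrow> (bF ^^ k) (1/2 + s) = 1/2 + tp (int k) * s" for k
  proof (induction k)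
    case 0 thus ?case by simp
  next
    case (Suc k)
    show ?case
    proof (intro allI impI)
      fix s :: real assume s: "0 \<le> s \<and> s \<le> tp (- int (Suc k)) / 8"
      have "tp (- int (Suc k)) = tp (- int k) / 2" by (rule tp_negSuc)
      hence s2: "2 * s \<le> tp (- int k) / 8" using s by simp
      have "tp (- int k) \<le> 1" by simp
      hence "s \<le> 1/16" using s2 by linarith
      hence "bF (1/2 + s) = 1/2 + 2 * s" using s by (auto simp: bF_def)
      moreover have "(bF ^^ k) (1/2 + 2 * s) = 1/2 + tp (int k) * (2 * s)" using Suc s s2 by simp
      moreover have "tp (int (Suc k)) = 2 * tp (int k)" using tp_Suc[of "int k"] by (simp add: add.commute)
      ultimately show "(bF ^^ Suc k) (1/2 + s) = 1/2 + tp (int (Suc k)) * s"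
        by (simp add: funpow_Suc_right del: funpow.simps)
    qed
  qed
  moreover have "- \<bar>n\<bar> = - int (nat n)" using True by simp
  ultimately show ?thesis using True assms by (simp add: gpow_alt)
next
  case False
  have "\<forall>s. 0 \<le> s \<and> s \<le> 1/4 \<longrightarrow> (bFi ^^ k) (1/2 + s) = 1/2 + tp (- int k) * s" for k
  proof (induction k)
    case 0 thus ?case by simp
  next
    case (Suc k)
    show ?case
    proof (intro allI impI)
      fix s :: real assume s: "0 \<le> s \<and> s \<le> 1/4"
      have "bFi (1/2 + s) = 1/2 + s / 2" using s by (auto simp: bFi_def field_simps)
      moreover have "(bFi ^^ k) (1/2 + s/2) = 1/2 + tp (- int k) * (s/2)" using Suc s by simp
      moreover have "tp (- int (Suc k)) = tp (- int k) / 2" by (rule tp_negSuc)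
      ultimately show "(bFi ^^ Suc k) (1/2 + s) = 1/2 + tp (- int (Suc k)) * s"
        by (simp add: funpow_Suc_right del: funpow.simps)
    qed
  qed
  moreover have "tp (- \<bar>n\<bar>) \<le> 1" by simp
  hence "s \<le> 1/4" using assms by linarith
  moreover have e: "- int (nat (-n)) = n" using False by simp
  ultimately have "(bFi ^^ nat (-n)) (1/2 + s) = 1/2 + tp n * s" using assms by (metis e)
  thus ?thesis using False by (simp add: gpow_alt inv_bF)
qed

lemma bFi_orbit: assumes "t \<in> D 0" "0 < e" shows "\<exists>n. (bFi ^^ n) t < 1/2 + e"
proof -
  have low: "\<exists>n. (bFi ^^ n) t < 1/2 + e" if "1/2 < t" "t \<le> 3/4" for t
  proof -
    have f: "(bFi ^^ k) t = 1/2 + (t - 1/2) * tp (- int k)" for k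
    proof (induction k)
      case 0 thus ?case by simp
    next
      case (Suc k)
      have "(bFi ^^ k) t \<le> 3/4" "1/2 < (bFi ^^ k) t"
      proof -
        have "tp (- int k) \<le> 1" by simp
        hence "(t - 1/2) * tp (- int k) \<le> (t - 1/2) * 1" using that by (intro mult_left_mono) auto
        moreover have "0 < (t - 1/2) * tp (- int k)" using that by simp
        ultimately show "(bFi ^^ k) t \<le> 3/4" "1/2 < (bFi ^^ k) t" using Suc that by (simp_all only: mult_1_right)
      qed
      hence bk: "bFi ((bFi ^^ k) t) = ((bFi ^^ k) t + 1/2) / 2" by (simp add: bFi_def)
      have "(bFi ^^ Suc k) t = bFi ((bFi ^^ k) t)" by simp
      also have "\<dots> = ((bFi ^^ k) t + 1/2) / 2" by (rule bk)
      also have "\<dots> = 1/2 + (t - 1/2) * (tp (- int k) / 2)" unfolding Suc by (simp add: field_simps)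
      finally show ?case by (simp only: tp_negSuc)
    qed
    obtain k :: nat where "tp (- int k) < e" using tp_small \<open>0 < e\<close> by blast
    moreover have "t - 1/2 \<le> 1" using that by simp
    moreover have "(t - 1/2) * tp (- int k) \<le> 1 * tp (- int k)"
      using that by (intro mult_right_mono) auto
    ultimately have "(t - 1/2) * tp (- int k) < e" by linarith
    thus ?thesis using f by (intro exI[of _ k]) simp
  qed
  have high: "\<forall>t. 3/4 < t \<and> t < 7/8 \<and> tp (- int N) / 8 \<le> 7/8 - t \<longrightarrow> (\<exists>n. 1/2 < (bFi ^^ n) t \<and> (bFi ^^ n) t \<le> 3/4)" for N
  proof (induction N)
    case 0 thus ?case by simp
  next
    case (Suc N)
    show ?case
    proof (intro allI impI)
      fix t :: real assume t: "3/4 < t \<and> t < 7/8 \<and> tp (- int (Suc N)) / 8 \<le> 7/8 - t"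
      have bt: "bFi t = 2 * t - 7/8" using t by (simp add: bFi_def)
      show "\<exists>n. 1/2 < (bFi ^^ n) t \<and> (bFi ^^ n) t \<le> 3/4"
      proof (cases "bFi t \<le> 3/4")
        case True
        thus ?thesis using bt t by (intro exI[of _ 1]) simp
      next
        case False
        have "tp (- int (Suc N)) = tp (- int N) / 2" by (rule tp_negSuc)
        hence "tp (- int N) / 8 \<le> 7/8 - bFi t" using t bt by simp
        then obtain n where "1/2 < (bFi ^^ n) (bFi t) \<and> (bFi ^^ n) (bFi t) \<le> 3/4"
          using Suc[rule_format, of "bFi t"] False bt t by auto
        thus ?thesis by (intro exI[of _ "Suc n"]) (simp add: funpow_Suc_right del: funpow.simps)
      qed
    qed
  qed
  show ?thesis
  proof (cases "t \<le> 3/4")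
    case True thus ?thesis using low assms by (simp add: D0)
  next
    case False
    have "0 < 8 * (7/8 - t)" using assms by (simp add: D0)
    then obtain N :: nat where "tp (- int N) < 8 * (7/8 - t)" using tp_small by blast
    hence "tp (- int N) / 8 < 7/8 - t" by simp
    hence "3/4 < t \<and> t < 7/8 \<and> tp (- int N) / 8 \<le> 7/8 - t" using False assms by (auto simp: D0)
    from high[of N, rule_format, OF this] obtain n where n: "1/2 < (bFi ^^ n) t" "(bFi ^^ n) t \<le> 3/4"
      by blast
    then obtain n' where "(bFi ^^ n') ((bFi ^^ n) t) < 1/2 + e" using low by blast
    thus ?thesis by (intro exI[of _ "n' + n"]) (simp add: funpow_add)
  qed
qed

lemma bconj_eq: "bconj k = P k \<circ> bF \<circ> P (- k)"
  by (simp add: bconj_def gmul_def P_def elb_eq comp_assoc)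

lemma bconj_pow: "gpow (bconj k) n = P k \<circ> gpow bF n \<circ> P (- k)"
  using gpow_conj[OF bij_bF bij_P, of k n] by (simp add: bconj_eq inv_P)

lemma bij_bconj: "bij (bconj k)" by (simp add: bconj_eq bij_comp bij_P bij_bF)

lemma X_fix: "t \<notin> D k \<Longrightarrow> gpow (bconj k) n t = t"
proof -
  assume "t \<notin> D k"
  hence "P (- k) t \<notin> D 0" using P_D_iff'[of "-k" t 0] by simp
  thus ?thesis by (simp add: bconj_pow bpow_fix P_inv_pt)
qed

lemma X_D: "t \<in> D k \<Longrightarrow> gpow (bconj k) n t \<in> D k"
proof -
  assume "t \<in> D k"
  hence "P (- k) t \<in> D 0" using P_D_iff'[of "-k" t 0] by simp
  hence "gpow bF n (P (- k) t) \<in> D 0" by (rule bpow_D)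
  thus ?thesis using P_D_iff'[of k _ k] by (simp add: bconj_pow)
qed

lemma X_add: "gpow (bconj k) (m + n) t = gpow (bconj k) m (gpow (bconj k) n t)"
  by (simp add: gpow_add bij_bconj)



definition RG :: "(real \<Rightarrow> real) \<Rightarrow> real \<Rightarrow> int \<Rightarrow> bool" where
  "RG f p k \<longleftrightarrow> (\<exists>e>0. \<forall>s. 0 \<le> s \<and> s < e \<longrightarrow> f (p + s) = f p + tp k * s)"

lemma RG_comp: assumes "RG f p k1" "RG g (f p) k2" shows "RG (g \<circ> f) p (k1 + k2)"
proof -
  obtain e1 where e1: "e1 > 0" "\<forall>s. 0 \<le> s \<and> s < e1 \<longrightarrow> f (p + s) = f p + tp k1 * s"
    using assms(1) unfolding RG_def by blast
  obtain e2 where e2: "e2 > 0" "\<forall>s. 0 \<le> s \<and> s < e2 \<longrightarrow> g (f p + s) = g (f p) + tp k2 * s"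
    using assms(2) unfolding RG_def by blast
  define e where "e = min e1 (e2 / tp k1)"
  have "e > 0" using e1 e2 by (simp add: e_def)
  moreover have "(g \<circ> f) (p + s) = (g \<circ> f) p + tp (k1 + k2) * s" if "0 \<le> s" "s < e" for s
  proof -
    have "f (p + s) = f p + tp k1 * s" using e1 that by (simp add: e_def)
    moreover have "tp k1 * s < e2" using that by (simp add: e_def pos_less_divide_eq mult.commute)
    hence "g (f p + tp k1 * s) = g (f p) + tp k2 * (tp k1 * s)" using e2 that by simp
    ultimately show ?thesis by (simp add: tp_add)
  qed
  ultimately show ?thesis unfolding RG_def by (metis add.right_neutral)
qed

lemma RG_comp': "RG f p k1 \<Longrightarrow> RG g (f p) k2 \<Longrightarrow> RG (\<lambda>t. g (f t)) p (k1 + k2)"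
  using RG_comp[of f p k1 g k2] by (simp add: comp_def)

lemma RG_unique: assumes "RG f p k" "RG f p k'" shows "k = k'"
proof -
  obtain e where e: "e > 0" "\<forall>s. 0 \<le> s \<and> s < e \<longrightarrow> f (p + s) = f p + tp k * s"
    using assms(1) unfolding RG_def by blast
  obtain e' where e': "e' > 0" "\<forall>s. 0 \<le> s \<and> s < e' \<longrightarrow> f (p + s) = f p + tp k' * s"
    using assms(2) unfolding RG_def by blast
  define s where "s = min e e' / 2"
  have "0 < s" "s < e" "s < e'" using e e' by (auto simp: s_def)
  have "f (p + s) = f p + tp k * s" using e(2) \<open>0 < s\<close> \<open>s < e\<close> by simp
  moreover have "f (p + s) = f p + tp k' * s" using e'(2) \<open>0 < s\<close> \<open>s < e'\<close> by simp
  ultimately have "tp k * s = tp k' * s" by linarith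
  hence "tp k = tp k'" using \<open>0 < s\<close> by simp
  thus ?thesis by simp
qed

lemma find_piece: fixes p :: real shows "xs \<noteq> [] \<Longrightarrow> hd xs \<le> p \<Longrightarrow> p < last xs \<Longrightarrow> \<exists>i < length xs - 1. xs ! i \<le> p \<and> p < xs ! (i + 1)"
proof (induction xs)
  case Nil thus ?case by simp
next
  case (Cons x ys)
  have "ys \<noteq> []" using Cons by auto
  show ?case
  proof (cases "p < hd ys")
    case True
    thus ?thesis using Cons \<open>ys \<noteq> []\<close> by (intro exI[of _ 0]) (auto simp: hd_conv_nth)
  next
    case False
    then obtain i where "i < length ys - 1" "ys ! i \<le> p" "p < ys ! (i + 1)"
      using Cons \<open>ys \<noteq> []\<close> by auto
    thus ?thesis by (intro exI[of _ "Suc i"]) auto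
  qed
qed

lemma V_out: "f \<in> thompsonV \<Longrightarrow> t \<notin> {0..<1} \<Longrightarrow> f t = t"
  unfolding thompsonV_def by blast
lemma V_01: "f \<in> thompsonV \<Longrightarrow> t \<in> {0..<1} \<Longrightarrow> f t \<in> {0..<1}"
  unfolding thompsonV_def using bij_betwE by blast

lemma V_RG: assumes "f \<in> thompsonV" shows "\<exists>k. RG f p k"
proof (cases "p \<in> {0..<1}")
  case False
  show ?thesis
  proof (cases "p < 0")
    case True
    have "f (p + s) = f p + tp 0 * s" if "0 \<le> s" "s < - p" for s
      using V_out[OF assms] True that by simp
    thus ?thesis unfolding RG_def using True by (intro exI[of _ 0] exI[of _ "-p"]) auto
  next
    case F: False
    hence "1 \<le> p" using False by auto
    have "f (p + s) = f p + tp 0 * s" if "0 \<le> s" for s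
      using V_out[OF assms] \<open>1 \<le> p\<close> that by simp
    thus ?thesis unfolding RG_def by (intro exI[of _ 0] exI[of _ 1]) auto
  qed
next
  case True
  obtain ps :: "real list" where ps: "length ps \<ge> 2" "sorted_wrt (<) ps" "hd ps = 0" "last ps = 1"
    "\<forall>i < length ps - 1. (\<exists>k::int. \<exists>c::real. \<forall>t \<in> {ps ! i ..< ps ! (i+1)}. f t = 2 powr (real_of_int k) * t + c)"
    using assms unfolding thompsonV_def by blast
  have "ps \<noteq> []" using ps(1) by auto
  then obtain i where i: "i < length ps - 1" "ps ! i \<le> p" "p < ps ! (i + 1)"
    using find_piece[of ps p] ps True by auto
  obtain k c where kc: "\<forall>t \<in> {ps ! i ..< ps ! (i+1)}. f t = tp k * t + c"
    using ps(5) i(1) unfolding tp_def by blast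
  have "f (p + s) = f p + tp k * s" if "0 \<le> s" "s < ps ! (i+1) - p" for s
  proof -
    have "f (p + s) = tp k * (p + s) + c" using kc i that by auto
    moreover have "f p = tp k * p + c" using kc i by auto
    ultimately show ?thesis by (simp add: algebra_simps)
  qed
  thus ?thesis unfolding RG_def using i by (intro exI[of _ k] exI[of _ "ps ! (i+1) - p"]) auto
qed

lemma V_last: assumes "f \<in> thompsonV" shows "\<exists>q<1. \<exists>l c. \<forall>t. q \<le> t \<and> t < 1 \<longrightarrow> f t = l * t + c"
proof -
  obtain ps :: "real list" where ps: "length ps \<ge> 2" "sorted_wrt (<) ps" "hd ps = 0" "last ps = 1"
    "\<forall>i < length ps - 1. (\<exists>k::int. \<exists>c::real. \<forall>t \<in> {ps ! i ..< ps ! (i+1)}. f t = 2 powr (real_of_int k) * t + c)"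
    using assms unfolding thompsonV_def by blast
  define i where "i = length ps - 2"
  have i: "i < length ps - 1" "i + 1 = length ps - 1" using ps(1) by (auto simp: i_def)
  have "ps \<noteq> []" using ps(1) by auto
  hence "ps ! (i + 1) = 1" using ps(4) i(2) by (simp add: last_conv_nth)
  moreover have "ps ! i < ps ! (i + 1)" using ps(2) i by (simp add: sorted_wrt_nth_less)
  moreover obtain k c where "\<forall>t \<in> {ps ! i ..< ps ! (i+1)}. f t = 2 powr (real_of_int k) * t + c"
    using ps(5) i by blast
  ultimately show ?thesis by (intro exI[of _ "ps ! i"]) auto
qed

subsection \<open>Centralizer of a\<close>

lemma ela_K: "t \<in> K i \<Longrightarrow> ela t = AK i (i + 2) t"
  using P_K[of t i 1] by (simp add: P_def)

lemma x0pow_comm: "gpow x0 m (gpow x0 n t) = gpow x0 n (gpow x0 m t)"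
  using gpow_comm[OF bij_x0, of m n] by (metis comp_apply)

lemma Ca: assumes v: "v \<in> thompsonV" and c: "\<forall>t. v (ela t) = ela (v t)"
  shows "\<exists>k. v = gpow x0 k"
proof -
  have cP: "v (P n t) = P n (v t)" for n t
  proof -
    have "v \<circ> ela = ela \<circ> v" using c by auto
    hence "v \<circ> gpow ela n = gpow ela n \<circ> v" by (rule gpow_commute[OF bij_ela])
    thus ?thesis unfolding P_def by (metis comp_apply)
  qed
  have v0: "v 0 = 0"
  proof (rule ccontr)
    assume "v 0 \<noteq> 0"
    moreover have "v 0 \<in> {0..<1}" using V_01[OF v] by simp
    ultimately obtain i where i: "v 0 \<in> K i" using K_cover by force
    have "ela (v 0) = v 0" using c[rule_format, of 0] x0_fix[of 0] by (simp add: ela_eq)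
    hence "AK i (i + 2) (v 0) \<in> K i" using ela_K[OF i] i by simp
    moreover have "AK i (i + 2) (v 0) \<in> K (i + 2)" by (rule AK_in[OF i])
    ultimately show False using K_unique by fastforce
  qed
  obtain k where "RG v 0 k" using V_RG[OF v] by blast
  then obtain e where e: "e > 0" "\<forall>s. 0 \<le> s \<and> s < e \<longrightarrow> v s = tp k * s"
    unfolding RG_def using v0 by auto
  obtain K0 where K0: "\<forall>i\<le>K0. tp i < e" using tp_small_int[OF e(1)] by blast
  have "v t = gpow x0 k t" for t
  proof (cases "0 < t \<and> t < 1")
    case False
    hence "t \<le> 0 \<or> 1 \<le> t" by auto
    moreover have "v t = t" if "t \<noteq> 0" "t \<le> 0 \<or> 1 \<le> t" using V_out[OF v] that by auto
    ultimately show ?thesis using v0 x0pow_fix[of t k] by (cases "t = 0") auto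
  next
    case True
    then obtain i where i: "t \<in> K i" using K_cover by blast
    define n :: int where "n = \<bar>i\<bar> + \<bar>K0\<bar> + \<bar>k\<bar> + 1"
    define j where "j = i - 2 * n"
    have j: "j \<le> 0" "j + k \<le> 0" "j - 1 \<le> K0" by (auto simp: j_def n_def)
    define s where "s = P (- n) t"
    have s: "s \<in> K j" unfolding s_def j_def using P_K[OF i, of "-n"] AK_in[OF i] by simp
    have "s < lK (j + 1)" using s by (simp add: K_def)
    also have "lK (j + 1) = tp (j - 1)" using j by (simp add: lK_low)
    also have "\<dots> < e" using K0 j by simp
    finally have "s < e" .
    moreover have "0 \<le> s" using K_sub[OF s] by simp
    ultimately have "v s = tp k * s" using e by simp
    also have "\<dots> = gpow x0 k s" using x0pow_K[OF s, of k] AK_low[of j "j+k"] j by simp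
    finally have vs: "v s = gpow x0 k s" .
    have "t = P n s" unfolding s_def by (simp add: P_inv_pt)
    hence "v t = P n (v s)" using cP by simp
    also have "\<dots> = gpow x0 k (P n s)" unfolding vs P_x0 by (rule x0pow_comm)
    finally show ?thesis using \<open>t = P n s\<close> by simp
  qed
  thus ?thesis by blast
qed

subsection \<open>Centralizer of b\<close>

lemma Cb: assumes comm: "\<forall>t. g (bF t) = bF (g t)" and rg: "RG g (1/2) j"
  shows "g (1/2) = 1/2" "\<forall>t\<in>D 0. g t = gpow bF j t"
proof -
  obtain e where e: "e > 0" "\<forall>s. 0 \<le> s \<and> s < e \<longrightarrow> g (1/2 + s) = g (1/2) + tp j * s"
    using rg unfolding RG_def by blast
  define c where "c = g (1/2)"
  have b12: "bF (1/2) = 1/2" by (simp add: bF_def)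
  have "g (1/2) = bF (g (1/2))" using comm[rule_format, of "1/2"] by (simp only: b12)
  hence "bF c = c" by (simp add: c_def)
  hence cD: "c \<notin> D 0" using bF_moves by blast
  define d where "d = min (e/2) (1/16)"
  have d: "0 < d" "d \<le> e/2" "d \<le> 1/16" using e by (auto simp: d_def)
  have inD: "c + tp j * s \<in> D 0" if "0 < s" "s < d" for s
  proof -
    have "bF (1/2 + s) = 1/2 + 2 * s" using that d by (auto simp: bF_def)
    hence "g (1/2 + 2 * s) = bF (g (1/2 + s))" using comm[rule_format, of "1/2+s"] by simp
    moreover have "g (1/2 + 2 * s) = c + tp j * (2 * s)" using e that d by (simp add: c_def)
    moreover have "g (1/2 + s) = c + tp j * s" using e that d by (simp add: c_def)
    ultimately have "bF (c + tp j * s) = c + tp j * (2 * s)" by simp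
    moreover have "0 < tp j * s" using that by simp
    ultimately have "bF (c + tp j * s) \<noteq> c + tp j * s" by linarith
    thus ?thesis using bF_fix by blast
  qed
  show c12: "g (1/2) = 1/2"
  proof (rule ccontr)
    assume "g (1/2) \<noteq> 1/2"
    hence cne: "c \<noteq> 1/2" by (simp add: c_def)
    show False
    proof (cases "c < 1/2")
      case True
      define s where "s = min (d/2) ((1/2 - c) / (2 * tp j))"
      have s: "0 < s" "s < d" using d True by (auto simp: s_def)
      have "tp j * s \<le> tp j * ((1/2 - c) / (2 * tp j))" by (intro mult_left_mono) (auto simp: s_def)
      hence "c + tp j * s < 1/2" using True by simp
      thus False using inD[OF s] by (simp add: D0)
    next
      case False
      hence "7/8 \<le> c" using cD cne by (auto simp: D0)
      moreover have "0 < tp j * (d/2)" using d by simp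
      moreover have "c + tp j * (d/2) \<in> D 0" using inD[of "d/2"] d by simp
      hence "c + tp j * (d/2) < 7/8" by (simp add: D0)
      ultimately show False by linarith
    qed
  qed
  have cg: "g \<circ> bF = bF \<circ> g" using comm by auto
  have gcomm: "g (gpow bF n t) = gpow bF n (g t)" for n t
    using gpow_commute[OF bij_bF cg, of n] by (metis comp_apply)
  show "\<forall>t\<in>D 0. g t = gpow bF j t"
  proof
    fix t assume t: "t \<in> D 0"
    define d' where "d' = min e (tp (- \<bar>j\<bar>) / 8)"
    have "0 < d'" using e by (simp add: d'_def)
    then obtain n where n: "(bFi ^^ n) t < 1/2 + d'" using bFi_orbit[OF t] by blast
    define u where "u = gpow bF (- int n) t"
    have u: "u = (bFi ^^ n) t" unfolding u_def by (simp add: gpow_alt inv_bF)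
    have uD: "u \<in> D 0" unfolding u_def by (rule bpow_D[OF t])
    define s where "s = u - 1/2"
    have s: "0 < s" "s < e" "s < tp (- \<bar>j\<bar>) / 8" using uD n u by (auto simp: s_def D0 d'_def)
    have "g (1/2 + s) = g (1/2) + tp j * s" using e(2) s by simp
    moreover have "1/2 + s = u" by (simp add: s_def)
    ultimately have "g u = 1/2 + tp j * s" using c12 by simp
    also have "\<dots> = gpow bF j u" using bpow_germ[of s j] s by (simp add: s_def)
    finally have gu: "g u = gpow bF j u" .
    have tu: "t = gpow bF (int n) u" unfolding u_def using gpow_add[OF bij_bF, of "int n" "- int n"]
      by (metis add.right_inverse comp_apply gpow_0 id_apply)
    have "g t = gpow bF (int n) (g u)" unfolding tu by (rule gcomm)
    also have "\<dots> = gpow bF (int n) (gpow bF j u)" by (simp add: gu)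
    also have "\<dots> = gpow bF j (gpow bF (int n) u)"
      using gpow_comm[OF bij_bF, of "int n" j] by (metis comp_apply)
    finally show "g t = gpow bF j t" using tu by simp
  qed
qed



definition Dk :: "real \<Rightarrow> int" where "Dk t = (THE k. t \<in> D k)"
lemma Dk: "t \<in> D k \<Longrightarrow> Dk t = k" unfolding Dk_def using D_unique by blast

definition Bfun :: "(int \<Rightarrow> int) \<Rightarrow> real \<Rightarrow> real" where
  "Bfun n t = (if \<exists>k. t \<in> D k then gpow (bconj (Dk t)) (n (Dk t)) t else t)"

lemma Bfun_D: "t \<in> D k \<Longrightarrow> Bfun n t = gpow (bconj k) (n k) t"
  unfolding Bfun_def using Dk by auto
lemma Bfun_out: "\<forall>k. t \<notin> D k \<Longrightarrow> Bfun n t = t"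
  unfolding Bfun_def by auto

lemma X_fix': "t \<in> D j \<Longrightarrow> j \<noteq> k \<Longrightarrow> gpow (bconj k) n t = t"
  using X_fix D_unique by blast

lemma X_D_any: "t \<in> D i \<Longrightarrow> gpow (bconj j) r t \<in> D i"
  by (cases "i = j") (auto simp: X_D X_fix')

lemma X0[simp]: "gpow (bconj k) 0 = id" by simp

lemma foldr_Bfun: "distinct ks \<Longrightarrow>
  foldr (\<lambda>k acc. gmul (gpow (bconj k) (n k)) acc) ks id t = Bfun (\<lambda>j. if j \<in> set ks then n j else 0) t"
proof (induction ks arbitrary: t)
  case Nil thus ?case by (cases "\<exists>k. t \<in> D k") (auto simp: Bfun_D Bfun_out)
next
  case (Cons k ks)
  have kn: "k \<notin> set ks" "distinct ks" using Cons.prems by auto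
  have "foldr (\<lambda>k acc. gmul (gpow (bconj k) (n k)) acc) (k # ks) id t
      = foldr (\<lambda>k acc. gmul (gpow (bconj k) (n k)) acc) ks id (gpow (bconj k) (n k) t)"
    by (simp add: gmul_def)
  also have "\<dots> = Bfun (\<lambda>j. if j \<in> set ks then n j else 0) (gpow (bconj k) (n k) t)"
    using Cons.IH[OF kn(2), of "gpow (bconj k) (n k) t"] by (simp add: id_def)
  also have "\<dots> = Bfun (\<lambda>j. if j \<in> set (k # ks) then n j else 0) t"
  proof (cases "\<exists>j. t \<in> D j")
    case True
    then obtain j where j: "t \<in> D j" by blast
    show ?thesis
    proof (cases "j = k")
      case True
      have "gpow (bconj k) (n k) t \<in> D k" using X_D j True by blast
      thus ?thesis using j True kn by (simp add: Bfun_D)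
    next
      case False
      thus ?thesis using j X_fix'[OF j False] by (simp add: Bfun_D)
    qed
  next
    case False
    thus ?thesis using X_fix[of t k] by (simp add: Bfun_out)
  qed
  finally show ?case .
qed

lemma bprod_Bfun: "bprod N n = Bfun (\<lambda>j. if j \<in> {-N..N} then n j else 0)"
  unfolding bprod_def using foldr_Bfun[of "[-N..N]" n] by auto

lemma Bfun_comp: "Bfun n1 (Bfun n2 t) = Bfun (\<lambda>k. n1 k + n2 k) t"
proof (cases "\<exists>k. t \<in> D k")
  case True
  then obtain k where k: "t \<in> D k" by blast
  have "Bfun n2 t \<in> D k" using X_D k by (simp add: Bfun_D)
  thus ?thesis using k by (simp add: Bfun_D X_add)
qed (simp add: Bfun_out)

lemma Bfun_zero: "Bfun (\<lambda>k. 0) = id"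
proof
  fix t show "Bfun (\<lambda>k. 0) t = id t" by (cases "\<exists>k. t \<in> D k") (auto simp: Bfun_D Bfun_out)
qed

lemma Bfun_inverse: "Bfun n (Bfun (\<lambda>k. - n k) t) = t" "Bfun (\<lambda>k. - n k) (Bfun n t) = t"
  using Bfun_zero by (simp_all add: Bfun_comp)

lemma bij_Bfun: "bij (Bfun n)"
  by (rule o_bij[where g="Bfun (\<lambda>k. - n k)"]) (auto simp: Bfun_inverse)
lemma inv_Bfun: "inv (Bfun n) = Bfun (\<lambda>k. - n k)"
  by (rule inv_unique) (auto simp: Bfun_inverse)

lemma bconj_pow_pt: "gpow (bconj k) r t = P k (gpow bF r (P (- k) t))"
  by (simp add: bconj_pow)

lemma Bfun_shift: "P j (Bfun n t) = Bfun (\<lambda>k. n (k - j)) (P j t)"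
proof (cases "\<exists>k. t \<in> D k")
  case True
  then obtain k where k: "t \<in> D k" by blast
  have Pk: "P j t \<in> D (k + j)" using P_D[OF k] .
  have "P j (Bfun n t) = P j (P k (gpow bF (n k) (P (- k) t)))" using k by (simp add: Bfun_D bconj_pow_pt)
  also have "\<dots> = P (k + j) (gpow bF (n k) (P (- (k + j)) (P j t)))"
    by (simp add: P_add_pt[symmetric] add.commute)
  also have "\<dots> = Bfun (\<lambda>k. n (k - j)) (P j t)" using Pk by (simp add: Bfun_D bconj_pow_pt)
  finally show ?thesis .
next
  case False
  hence "\<forall>k. P j t \<notin> D k" using P_D_iff' by blast
  thus ?thesis using False by (simp add: Bfun_out)
qed

lemma Bfun_commute_bconj: "Bfun n (bconj k t) = bconj k (Bfun n t)"
proof -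
  have b: "bconj k = gpow (bconj k) 1" by simp
  show ?thesis
  proof (cases "\<exists>j. t \<in> D j")
    case True
    then obtain j where j: "t \<in> D j" by blast
    show ?thesis
    proof (cases "j = k")
      case True
      have "bconj k t \<in> D k" using X_D[of t k 1] j True by simp
      thus ?thesis using j True X_add[of k "n k" 1 t] X_add[of k 1 "n k" t] by (simp add: Bfun_D add.commute)
    next
      case False
      thus ?thesis using j X_fix'[OF j False, of 1] X_fix'[OF X_D[OF j] False, of 1] by (simp add: Bfun_D)
    qed
  next
    case False
    thus ?thesis using X_fix[of t k 1] by (simp add: Bfun_out)
  qed
qed

definition finsupp :: "(int \<Rightarrow> int) \<Rightarrow> bool" where "finsupp n \<longleftrightarrow> finite {k. n k \<noteq> 0}"

lemma finsupp_bound: "finsupp n \<Longrightarrow> \<exists>N. \<forall>k. n k \<noteq> 0 \<longrightarrow> k \<in> {-N..N}"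
proof -
  assume "finsupp n"
  define N where "N = Max (insert 0 (abs ` {k. n k \<noteq> 0}))"
  have "\<bar>k\<bar> \<le> N" if "n k \<noteq> 0" for k
    unfolding N_def using \<open>finsupp n\<close> that by (intro Max_ge) (auto simp: finsupp_def)
  thus ?thesis by (intro exI[of _ N]) (force simp: abs_le_iff)
qed

lemma Bfun_bprod: assumes "finsupp n" shows "\<exists>N. Bfun n = bprod N n"
proof -
  obtain N where N: "\<forall>k. n k \<noteq> 0 \<longrightarrow> k \<in> {-N..N}" using finsupp_bound[OF assms] by blast
  have "(\<lambda>j. if j \<in> {-N..N} then n j else 0) = n" by (rule ext) (use N in auto)
  thus ?thesis by (intro exI[of _ N]) (simp add: bprod_Bfun)
qed

lemma finsupp_add: "finsupp n1 \<Longrightarrow> finsupp n2 \<Longrightarrow> finsupp (\<lambda>k. n1 k + n2 k)"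
  unfolding finsupp_def by (rule finite_subset[of _ "{k. n1 k \<noteq> 0} \<union> {k. n2 k \<noteq> 0}"]) auto
lemma finsupp_neg: "finsupp n \<Longrightarrow> finsupp (\<lambda>k. - n k)"
  unfolding finsupp_def by simp
lemma finsupp_shift: "finsupp n \<Longrightarrow> finsupp (\<lambda>k. n (k - j))"
proof -
  assume "finsupp n"
  have "{k. n (k - j) \<noteq> 0} = (\<lambda>k. k + j) ` {k. n k \<noteq> 0}" by (auto intro: image_eqI[of _ _ "_ - j"])
  thus ?thesis using \<open>finsupp n\<close> unfolding finsupp_def by simp
qed
lemma finsupp_zero: "finsupp (\<lambda>k. 0)" by (simp add: finsupp_def)

definition WF :: "(real \<Rightarrow> real) \<Rightarrow> bool" where
  "WF g \<longleftrightarrow> (\<exists>m n. finsupp n \<and> g = Bfun n \<circ> P m)"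

lemma WF_mul: assumes "WF g1" "WF g2" shows "WF (gmul g1 g2)"
proof -
  obtain m1 n1 where 1: "finsupp n1" "g1 = Bfun n1 \<circ> P m1" using assms(1) unfolding WF_def by blast
  obtain m2 n2 where 2: "finsupp n2" "g2 = Bfun n2 \<circ> P m2" using assms(2) unfolding WF_def by blast
  define n where "n = (\<lambda>k. n2 k + n1 (k - m2))"
  have "gmul g1 g2 = Bfun n \<circ> P (m2 + m1)"
  proof
    fix t
    have "gmul g1 g2 t = Bfun n2 (P m2 (Bfun n1 (P m1 t)))" by (simp add: 1 2 gmul_def)
    also have "\<dots> = Bfun n2 (Bfun (\<lambda>k. n1 (k - m2)) (P m2 (P m1 t)))" by (simp add: Bfun_shift)
    also have "\<dots> = (Bfun n \<circ> P (m2 + m1)) t" by (simp add: Bfun_comp n_def P_add_pt)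
    finally show "gmul g1 g2 t = (Bfun n \<circ> P (m2 + m1)) t" .
  qed
  moreover have "finsupp n" unfolding n_def by (intro finsupp_add finsupp_shift 1 2)
  ultimately show ?thesis unfolding WF_def by blast
qed

lemma WF_inv: assumes "WF g" shows "WF (ginv g)"
proof -
  obtain m n where 1: "finsupp n" "g = Bfun n \<circ> P m" using assms unfolding WF_def by blast
  define n' where "n' = (\<lambda>k. - n (k + m))"
  have "inv g = P (- m) \<circ> inv (Bfun n)" unfolding 1 by (simp add: o_inv_distrib bij_P bij_Bfun inv_P)
  also have "\<dots> = Bfun n' \<circ> P (- m)"
  proof
    fix t
    show "(P (- m) \<circ> inv (Bfun n)) t = (Bfun n' \<circ> P (- m)) t"
      by (simp add: inv_Bfun Bfun_shift n'_def)
  qed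
  finally have "ginv g = Bfun n' \<circ> P (- m)" by (simp add: ginv_def)
  moreover have "finsupp n'"
  proof -
    have "finsupp (\<lambda>k. - n (k - (- m)))" by (intro finsupp_neg finsupp_shift 1)
    thus ?thesis by (simp add: n'_def)
  qed
  ultimately show ?thesis unfolding WF_def by blast
qed

lemma elb_Bfun: "elb = Bfun (\<lambda>k. if k = 0 then 1 else 0)"
proof
  fix t
  show "elb t = Bfun (\<lambda>k. if k = 0 then 1 else 0) t"
  proof (cases "\<exists>k. t \<in> D k")
    case True
    then obtain k where k: "t \<in> D k" by blast
    show ?thesis
    proof (cases "k = 0")
      case True thus ?thesis using k by (simp add: Bfun_D bconj_eq elb_eq)
    next
      case False
      hence "t \<notin> D 0" using k D_unique by blast
      thus ?thesis using k False by (simp add: Bfun_D elb_eq bF_fix)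
    qed
  next
    case False
    thus ?thesis using bF_fix[of t] by (simp add: Bfun_out elb_eq)
  qed
qed

lemma gen_WF: "g \<in> gen_by {ela, elb} \<Longrightarrow> WF g"
proof (induction rule: gen_by.induct)
  case gen_id
  have "id = Bfun (\<lambda>k. 0) \<circ> P 0" by (simp add: Bfun_zero)
  thus ?case unfolding WF_def using finsupp_zero by blast
next
  case (gen_base s)
  show ?case
  proof (cases "s = ela")
    case True
    have "ela = Bfun (\<lambda>k. 0) \<circ> P 1" by (simp add: Bfun_zero P_def)
    thus ?thesis unfolding WF_def using finsupp_zero True by blast
  next
    case False
    hence "s = elb" using gen_base by simp
    moreover have "finsupp (\<lambda>k. if k = 0 then 1 else 0 :: int)" unfolding finsupp_def by simp
    ultimately show ?thesis unfolding WF_def using elb_Bfun by (intro exI[of _ 0]) auto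
  qed
next
  case (gen_mul x y) thus ?case using WF_mul by blast
next
  case (gen_inv x) thus ?case using WF_inv by blast
qed

lemma gpow_gen: assumes "x \<in> gen_by S" shows "gpow x m \<in> gen_by S"
proof -
  have xi: "ginv x \<in> gen_by S" using assms by (rule gen_inv)
  have "(gmul y ^^ k) id \<in> gen_by S" if y: "y \<in> gen_by S" for k y
  proof (induction k)
    case 0 show ?case by (simp only: funpow_0) (rule gen_id)
  next
    case (Suc k)
    have "(gmul y ^^ Suc k) id = gmul y ((gmul y ^^ k) id)" by (simp only: funpow.simps comp_apply)
    thus ?case using gen_mul[OF y Suc] by simp
  qed
  hence "(gmul x ^^ k) id \<in> gen_by S" "(gmul (ginv x) ^^ k) id \<in> gen_by S" for k
    using assms xi by blast+
  thus ?thesis by (simp add: gpow_def)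
qed

lemma bconj_gen: "bconj k \<in> gen_by {ela, elb}"
  unfolding bconj_def by (intro gen_by.intros gpow_gen) auto

lemma bprod_gen: "bprod N n \<in> gen_by {ela, elb}"
proof -
  have "foldr (\<lambda>k acc. gmul (gpow (bconj k) (n k)) acc) ks id \<in> gen_by {ela, elb}" for ks
  proof (induction ks)
    case Nil have "foldr (\<lambda>k acc. gmul (gpow (bconj k) (n k)) acc) [] id = id" by simp
    thus ?case by (metis gen_id)
  next
    case (Cons k ks) thus ?case by (simp only: foldr.simps comp_apply) (intro gen_mul gpow_gen bconj_gen)
  qed
  thus ?thesis by (simp add: bprod_def)
qed

lemma part3: "gmul (bconj j) (bconj k) = gmul (bconj k) (bconj j)"
proof -
  have "bconj k (bconj j t) = bconj j (bconj k t)" for t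
  proof (cases "j = k")
    case False
    show ?thesis
    proof (cases "\<exists>i. t \<in> D i")
      case True
      then obtain i where i: "t \<in> D i" by blast
      have Xj: "bconj j t \<in> D i" "bconj k t \<in> D i" using X_D_any[OF i, of _ 1] by simp_all
      show ?thesis
      proof (cases "i = j")
        case True
        thus ?thesis using X_fix'[OF i, of k 1] X_fix'[OF Xj(1), of k 1] False by simp
      next
        case F2: False
        hence "bconj j t = t" "bconj j (bconj k t) = bconj k t" using X_fix'[OF i F2, of 1] X_fix'[OF Xj(2) F2, of 1] by simp_all
        thus ?thesis by simp
      qed
    next
      case False
      thus ?thesis using X_fix[of t j 1] X_fix[of t k 1] by simp
    qed
  qed simp
  thus ?thesis by (auto simp: gmul_def)
qed

lemma part5: "g \<in> gen_by {ela, elb} \<Longrightarrow> \<exists>N m n. g = gmul (gpow ela m) (bprod N n)"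
proof -
  assume "g \<in> gen_by {ela, elb}"
  then obtain m n where "finsupp n" "g = Bfun n \<circ> P m" using gen_WF unfolding WF_def by blast
  moreover obtain N where "Bfun n = bprod N n" using Bfun_bprod[OF \<open>finsupp n\<close>] by blast
  ultimately show ?thesis by (intro exI[of _ N] exI[of _ m] exI[of _ n]) (simp add: gmul_def P_def)
qed

lemma part4: assumes "gmul (gpow ela m) (bprod N n) = id" shows "m = 0 \<and> (\<forall>k \<in> {- N..N}. n k = 0)"
proof -
  define n' where "n' = (\<lambda>j. if j \<in> {-N..N} then n j else 0)"
  have e: "Bfun n' (P m t) = t" for t
    using fun_cong[OF assms, of t] by (simp add: gmul_def bprod_Bfun n'_def P_def)
  have "Bfun n' (P m (pD 0)) = pD m" using P_pD[of m 0] pD_notin_D by (simp add: Bfun_out)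
  hence "pD m = pD 0" using e by simp
  hence m: "m = 0" by simp
  have "n k = 0" if k: "k \<in> {-N..N}" for k
  proof -
    define r where "r = n k"
    define s where "s = tp (- \<bar>r\<bar>) / 16"
    have s: "0 < s" "s < tp (- \<bar>r\<bar>) / 8" "s \<le> 1/16" by (auto simp: s_def)
    have "1/2 + s \<in> D 0" using s by (simp add: D0)
    hence tD: "P k (1/2 + s) \<in> D k" using P_D[of "1/2+s" 0 k] by simp
    have "Bfun n' (P k (1/2 + s)) = P k (1/2 + s)" using e[of "P k (1/2+s)"] m by simp
    hence "P k (gpow bF r (1/2 + s)) = P k (1/2 + s)"
      using tD k by (simp add: Bfun_D n'_def r_def bconj_pow_pt P_inv_pt)
    hence "gpow bF r (1/2 + s) = 1/2 + s" using P_inj by blast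
    hence "tp r * s = s" using bpow_germ[of s r] s by simp
    hence "tp r = 1" using s by simp
    thus ?thesis by (simp add: r_def)
  qed
  thus ?thesis using m by blast
qed



lemma P_V: "P k \<in> thompsonV" by (simp add: P_x0 x0pow_V)

lemma x0pow_near1: "\<exists>q<1. \<forall>t. q \<le> t \<and> t < 1 \<longrightarrow> gpow x0 m t = 1 - tp (- m) * (1 - t)"
proof -
  define M where "M = \<bar>m\<bar> + 1"
  have "gpow x0 m t = 1 - tp (- m) * (1 - t)" if t: "lK M \<le> t" "t < 1" for t
  proof -
    have "0 < t" using t lK_pos[of M] by linarith
    then obtain i where i: "t \<in> K i" using K_cover t by blast
    hence "M \<le> i" using K_index_ge t by auto
    hence "1 \<le> i" "1 \<le> i + m" by (auto simp: M_def)
    hence "AK i (i+m) t = 1 - tp (-m) * (1-t)" using AK_high[of i "i+m" t] by simp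
    thus ?thesis using x0pow_K[OF i] by simp
  qed
  thus ?thesis using lK_lt1[of M] by blast
qed

lemma P_near1: "\<exists>q<1. \<forall>t. q \<le> t \<and> t < 1 \<longrightarrow> P k t = 1 - tp (- 2 * k) * (1 - t)"
  using x0pow_near1[of "2*k"] by (simp add: P_x0)

lemma pD_low: "k \<le> 0 \<Longrightarrow> pD k = tp (2 * k - 1)"
  by (simp add: pD_def lK_low algebra_simps)
lemma pD_high: "0 \<le> k \<Longrightarrow> pD k = 1 - tp (- 2 * k - 1)"
  by (simp add: pD_def lK_high algebra_simps)

lemma forward:
  assumes e0V: "e0 \<in> thompsonV"
    and bdef: "\<beta> = (\<lambda>t. e0 (P (- m) t))"
    and comm: "\<And>k t. bconj k (\<beta> t) = \<beta> (bconj k t)"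
  shows "e0 \<in> gen_by {ela, elb}"
proof -
  have RGe: "\<exists>j. RG e0 p j" for p using V_RG[OF e0V] .
  have RGP: "\<exists>j. RG (P k) p j" for k p using V_RG[OF P_V] .
  have onD: "\<exists>j. \<beta> (pD k) = pD k \<and> (\<forall>t\<in>D k. \<beta> t = gpow (bconj k) j t)" for k
  proof -
    define g where "g = (\<lambda>t. P (- k) (\<beta> (P k t)))"
    have gcomm: "\<forall>t. g (bF t) = bF (g t)"
    proof
      fix t
      have "P k (bF t) = bconj k (P k t)" by (simp add: bconj_eq P_inv_pt)
      hence "g (bF t) = P (- k) (bconj k (\<beta> (P k t)))" by (simp add: g_def comm)
      also have "\<dots> = bF (g t)" by (simp add: bconj_eq P_inv_pt g_def)
      finally show "g (bF t) = bF (g t)" .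
    qed
    have geq: "g = (\<lambda>t. P (- k) (e0 (P (k - m) t)))"
      by (rule ext) (simp add: g_def bdef P_add_pt[symmetric])
    obtain j1 where j1: "RG (P (k - m)) (1/2) j1" using RGP by blast
    obtain j2 where j2: "RG e0 (P (k - m) (1/2)) j2" using RGe by blast
    obtain j3 where j3: "RG (P (- k)) (e0 (P (k - m) (1/2))) j3" using RGP by blast
    have r12: "RG (\<lambda>t. e0 (P (k - m) t)) (1/2) (j1 + j2)" by (rule RG_comp'[OF j1 j2])
    have "RG (\<lambda>t. P (- k) ((\<lambda>t. e0 (P (k - m) t)) t)) (1/2) (j1 + j2 + j3)"
      by (rule RG_comp'[OF r12]) (simp add: j3)
    hence "RG g (1/2) (j1 + j2 + j3)" unfolding geq by simp
    from Cb[OF gcomm this] have c: "g (1/2) = 1/2" "\<forall>t\<in>D 0. g t = gpow bF (j1 + j2 + j3) t" by auto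
    have "\<beta> (pD k) = pD k"
    proof -
      have "pD k = P k (1/2)" using P_pD[of k 0] pD0 by simp
      hence "\<beta> (pD k) = P k (g (1/2))" by (simp add: g_def P_inv_pt)
      thus ?thesis using c(1) \<open>pD k = P k (1/2)\<close> by simp
    qed
    moreover have "\<beta> t = gpow (bconj k) (j1 + j2 + j3) t" if t: "t \<in> D k" for t
    proof -
      have "P (- k) t \<in> D 0" using P_D_iff'[of "-k" t 0] t by simp
      hence "g (P (- k) t) = gpow bF (j1 + j2 + j3) (P (- k) t)" using c(2) by blast
      hence "P k (g (P (- k) t)) = gpow (bconj k) (j1 + j2 + j3) t" by (simp add: bconj_pow_pt)
      thus ?thesis by (simp add: g_def P_inv_pt)
    qed
    ultimately show ?thesis by blast
  qed
  define jk where "jk k = (SOME j. \<forall>t\<in>D k. \<beta> t = gpow (bconj k) j t)" for k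
  have jk: "\<forall>t\<in>D k. \<beta> t = gpow (bconj k) (jk k) t" for k
  proof -
    have "\<exists>j. \<forall>t\<in>D k. \<beta> t = gpow (bconj k) j t" using onD[of k] by blast
    thus ?thesis unfolding jk_def by (rule someI_ex)
  qed
  have bpD: "\<beta> (pD k) = pD k" for k using onD by blast
  have bout: "\<beta> t = t" if "t < 0 \<or> 1 \<le> t" for t
    using that P_fix[of t "-m"] V_out[OF e0V, of t] by (auto simp: bdef)
  obtain r where r: "RG \<beta> 0 r"
  proof -
    obtain j1 where j1: "RG (P (- m)) 0 j1" using RGP by blast
    obtain j2 where j2: "RG e0 (P (- m) 0) j2" using RGe by blast
    have "RG (\<lambda>t. e0 (P (- m) t)) 0 (j1 + j2)" by (rule RG_comp'[OF j1 j2])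
    hence "RG \<beta> 0 (j1 + j2)" by (simp only: bdef)
    thus ?thesis by (rule that)
  qed
  then obtain e where e: "e > 0" "\<forall>s. 0 \<le> s \<and> s < e \<longrightarrow> \<beta> s = \<beta> 0 + tp r * s"
    unfolding RG_def by auto
  obtain K0 where K0: "\<forall>i\<le>K0. tp i < e" using tp_small_int[OF e(1)] by blast
  define k0 where "k0 = - \<bar>K0\<bar> - 1"
  have "k0 + 1 \<le> 0" "2 * (k0 + 1) - 1 \<le> K0" by (simp_all add: k0_def)
  hence pk0: "pD (k0 + 1) < e" using K0 pD_low[of "k0+1"] by simp
  have low_id: "\<beta> s = s" if "0 \<le> s" "s < e" for s
  proof -
    have lt: "pD k0 < pD (k0 + 1)" by simp
    have s0: "0 \<le> pD k0 \<and> pD k0 < e" using pD_pos[of k0] pk0 lt by linarith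
    have "\<beta> (pD k0) = \<beta> 0 + tp r * pD k0" using e(2) s0 by blast
    hence a: "pD k0 = \<beta> 0 + tp r * pD k0" using bpD[of k0] by linarith
    have s1: "0 \<le> pD (k0+1) \<and> pD (k0+1) < e" using pD_pos[of "k0+1"] pk0 by linarith
    have "\<beta> (pD (k0+1)) = \<beta> 0 + tp r * pD (k0+1)" using e(2) s1 by blast
    hence b: "pD (k0+1) = \<beta> 0 + tp r * pD (k0+1)" using bpD[of "k0+1"] by linarith
    have "(pD (k0+1) - pD k0) * (1 - tp r) = (pD (k0+1) - tp r * pD (k0+1)) - (pD k0 - tp r * pD k0)"
      by (simp add: algebra_simps)
    also have "\<dots> = 0" using a b by linarith
    finally have "(pD (k0+1) - pD k0) * (1 - tp r) = 0" .
    hence "tp r = 1" using lt by simp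
    have "\<beta> 0 = pD k0 - tp r * pD k0" using a by linarith
    hence "\<beta> 0 = 0" using \<open>tp r = 1\<close> by simp
    moreover have "\<beta> s = \<beta> 0 + tp r * s" using e(2) that by blast
    ultimately show ?thesis using \<open>tp r = 1\<close> by simp
  qed
  obtain qe l c where qe: "qe < 1" "\<forall>t. qe \<le> t \<and> t < 1 \<longrightarrow> e0 t = l * t + c"
    using V_last[OF e0V] by blast
  obtain qp where qp: "qp < 1" "\<forall>t. qp \<le> t \<and> t < 1 \<longrightarrow> P (- m) t = 1 - tp (2 * m) * (1 - t)"
    using P_near1[of "-m"] by auto
  define q where "q = max qp (1 - (1 - qe) / tp (2 * m))"
  have q: "q < 1" using qp qe by (simp add: q_def)
  have aff: "\<beta> t = l * (1 - tp (2 * m) * (1 - t)) + c" if "q \<le> t" "t < 1" for t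
  proof -
    have "P (- m) t = 1 - tp (2 * m) * (1 - t)" using qp that by (simp add: q_def)
    moreover have "1 - t \<le> (1 - qe) / tp (2 * m)" using that by (simp add: q_def)
    hence "tp (2 * m) * (1 - t) \<le> 1 - qe" by (simp add: pos_le_divide_eq mult.commute)
    hence "qe \<le> 1 - tp (2 * m) * (1 - t)" by simp
    moreover have "1 - tp (2 * m) * (1 - t) < 1" using that by simp
    ultimately show ?thesis using qe(2) by (simp add: bdef)
  qed
  have "0 < 1 - q" using q by simp
  then obtain K1 where K1: "\<forall>i\<le>K1. tp i < 1 - q" using tp_small_int by blast
  define k1 where "k1 = \<bar>K1\<bar> + 1"
  have "- 2 * k1 - 1 \<le> K1" by (simp add: k1_def)
  hence "tp (- 2 * k1 - 1) < 1 - q" using K1 by blast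
  moreover have "pD k1 = 1 - tp (- 2 * k1 - 1)" by (rule pD_high) (simp add: k1_def)
  ultimately have pk1: "q \<le> pD k1" by linarith
  have high_id: "\<beta> t = t" if "pD k1 \<le> t" "t < 1" for t
  proof -
    define A where "A = l * tp (2 * m)"
    define B where "B = l * (1 - tp (2 * m)) + c"
    have affAB: "\<beta> s = A * s + B" if "q \<le> s" "s < 1" for s
      using aff[OF that] by (simp add: A_def B_def algebra_simps)
    have lt: "pD k1 < pD (k1 + 1)" by simp
    have "\<beta> (pD k1) = A * pD k1 + B" using affAB[of "pD k1"] pk1 pD_lt1[of k1] by simp
    hence a: "pD k1 = A * pD k1 + B" using bpD[of k1] by linarith
    have "\<beta> (pD (k1+1)) = A * pD (k1+1) + B" using affAB[of "pD (k1+1)"] pk1 pD_lt1[of "k1+1"] lt by simp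
    hence b: "pD (k1+1) = A * pD (k1+1) + B" using bpD[of "k1+1"] by linarith
    have "(pD (k1+1) - pD k1) * (1 - A) = (pD (k1+1) - A * pD (k1+1)) - (pD k1 - A * pD k1)"
      by (simp add: algebra_simps)
    also have "\<dots> = 0" using a b by linarith
    finally have "(pD (k1+1) - pD k1) * (1 - A) = 0" .
    hence "A = 1" using lt by simp
    have "B = pD k1 - A * pD k1" using a by linarith
    hence "B = 0" using \<open>A = 1\<close> by simp
    thus ?thesis using affAB[of t] that pk1 \<open>A = 1\<close> by simp
  qed
  define N where "N = \<bar>k0\<bar> + k1"
  define n where "n k = (if k \<in> {-N..N} then jk k else 0)" for k
  have bB: "\<beta> t = Bfun n t" for t
  proof (cases "\<exists>k. t \<in> D k")
    case True
    then obtain k where k: "t \<in> D k" by blast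
    show ?thesis
    proof (cases "k \<in> {-N..N}")
      case True thus ?thesis using k jk by (simp add: Bfun_D n_def)
    next
      case False
      hence "k < k0 \<or> k1 \<le> k" by (auto simp: N_def k1_def)
      hence "\<beta> t = t"
      proof
        assume "k < k0"
        hence "pD (k+1) \<le> pD (k0 + 1)" by simp
        moreover have "t < pD (k+1)" "0 < t" using k D_sub by (auto simp: D_def)
        ultimately have "t < e" "0 \<le> t" using pk0 by linarith+
        thus "\<beta> t = t" by (rule low_id[rotated])
      next
        assume "k1 \<le> k"
        hence "pD k1 \<le> pD k" by simp
        moreover have "pD k < t" "t < 1" using k D_sub by (auto simp: D_def)
        ultimately have "pD k1 \<le> t" "t < 1" by linarith+
        thus "\<beta> t = t" by (rule high_id)
      qed
      moreover have "n k = 0" using False unfolding n_def by auto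
      hence "Bfun n t = t" using Bfun_D[OF k, of n] by simp
      ultimately show ?thesis by simp
    qed
  next
    case False
    have "\<beta> t = t"
    proof (cases "t < 0 \<or> 1 \<le> t")
      case True thus ?thesis by (rule bout)
    next
      case F2: False
      show ?thesis
      proof (cases "t = 0")
        case True thus ?thesis using low_id[of 0] e(1) by simp
      next
        case F3: False
        hence "\<exists>k. t = pD k" using D_cover[of t] False F2 by force
        thus ?thesis using bpD by auto
      qed
    qed
    thus ?thesis using False by (simp add: Bfun_out)
  qed
  have "finsupp n" unfolding finsupp_def n_def by (rule finite_subset[of _ "{-N..N}"]) auto
  then obtain N' where N': "Bfun n = bprod N' n" using Bfun_bprod by blast
  have "e0 = gmul (gpow ela m) (bprod N' n)"
  proof
    fix t
    have "e0 t = \<beta> (P m t)" by (simp add: bdef P_inv_pt)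
    thus "e0 t = gmul (gpow ela m) (bprod N' n) t" by (simp add: bB N'[symmetric] gmul_def P_def)
  qed
  thus ?thesis by (simp add: gen_mul gpow_gen bprod_gen gen_base)
qed



lemma comm_iff: "gmul u ela = gmul ela u \<longleftrightarrow> (\<forall>t. u (ela t) = ela (u t))"
  by (auto simp: gmul_def fun_eq_iff)

lemma sq_x0pow: "gmul (gpow x0 k) (gpow x0 k) = P k"
proof -
  have "gpow x0 (2*k) = gpow x0 k \<circ> gpow x0 k" using gpow_add[OF bij_x0, of k k] by (simp only: mult_2)
  thus ?thesis by (simp only: gmul_def P_x0)
qed

lemma ginv_P: "ginv (P k) = P (- k)" by (simp add: ginv_def inv_P)

lemma Cv_x0pow: "gmul (gmul (ginv (gmul (gpow x0 k) (gpow x0 k))) elb) (gmul (gpow x0 k) (gpow x0 k)) = bconj k"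
  by (simp only: sq_x0pow ginv_P) (simp add: bconj_def P_def)

lemma x0pow_comm_ela: "gmul (gpow x0 k) ela = gmul ela (gpow x0 k)"
proof -
  have "ela = gpow x0 2" using P_x0[of 1] by (simp add: P_def)
  thus ?thesis using gpow_comm[OF bij_x0, of 2 k] by (simp add: gmul_def)
qed

lemma main_equiv:
  assumes GV: "G \<subseteq> thompsonV" and pw: "\<And>k. gpow x0 k \<in> G" and e0: "e0 \<in> G"
  shows "(\<exists>u\<in>G. gmul u ela = gmul ela u \<and>
           (\<forall>v\<in>G. gmul v ela = gmul ela v \<longrightarrow>
              gmul (gmul (ginv (gmul u u)) e0) (gmul (gmul (ginv (gmul v v)) elb) (gmul v v))
            = gmul (gmul (gmul (ginv (gmul v v)) elb) (gmul v v)) (gmul (ginv (gmul u u)) e0)))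
         \<longleftrightarrow> e0 \<in> gen_by {ela, elb}"
proof
  assume "\<exists>u\<in>G. gmul u ela = gmul ela u \<and>
           (\<forall>v\<in>G. gmul v ela = gmul ela v \<longrightarrow>
              gmul (gmul (ginv (gmul u u)) e0) (gmul (gmul (ginv (gmul v v)) elb) (gmul v v))
            = gmul (gmul (gmul (ginv (gmul v v)) elb) (gmul v v)) (gmul (ginv (gmul u u)) e0))"
  then obtain u where u: "u \<in> G" "gmul u ela = gmul ela u" and
    h: "\<And>v. v \<in> G \<Longrightarrow> gmul v ela = gmul ela v \<Longrightarrow>
              gmul (gmul (ginv (gmul u u)) e0) (gmul (gmul (ginv (gmul v v)) elb) (gmul v v))
            = gmul (gmul (gmul (ginv (gmul v v)) elb) (gmul v v)) (gmul (ginv (gmul u u)) e0)" by blast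
  obtain m where m: "u = gpow x0 m" using Ca[of u] u GV comm_iff by blast
  define \<beta> where "\<beta> = (\<lambda>t. e0 (P (- m) t))"
  have b: "gmul (ginv (gmul u u)) e0 = \<beta>" by (simp only: m sq_x0pow ginv_P) (simp add: \<beta>_def gmul_def comp_def)
  have "bconj k (\<beta> t) = \<beta> (bconj k t)" for k t
  proof -
    have "gmul \<beta> (bconj k) = gmul (bconj k) \<beta>"
      using h[OF pw x0pow_comm_ela, of k] unfolding b Cv_x0pow .
    thus ?thesis by (simp add: gmul_def fun_eq_iff)
  qed
  moreover have "e0 \<in> thompsonV" using e0 GV by blast
  ultimately show "e0 \<in> gen_by {ela, elb}" using forward[OF _ \<beta>_def] by blast
next
  assume "e0 \<in> gen_by {ela, elb}"
  then obtain m n where mn: "finsupp n" "e0 = Bfun n \<circ> P m" using gen_WF unfolding WF_def by blast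
  define u where "u = gpow x0 m"
  have b: "gmul (ginv (gmul u u)) e0 = Bfun n"
    by (simp only: u_def sq_x0pow ginv_P) (rule ext, simp add: gmul_def mn P_inv_pt)
  show "\<exists>u\<in>G. gmul u ela = gmul ela u \<and>
           (\<forall>v\<in>G. gmul v ela = gmul ela v \<longrightarrow>
              gmul (gmul (ginv (gmul u u)) e0) (gmul (gmul (ginv (gmul v v)) elb) (gmul v v))
            = gmul (gmul (gmul (ginv (gmul v v)) elb) (gmul v v)) (gmul (ginv (gmul u u)) e0))"
  proof (intro bexI[of _ u] conjI ballI impI)
    show "u \<in> G" by (simp add: u_def pw)
    show "gmul u ela = gmul ela u" by (simp add: u_def x0pow_comm_ela)
    fix v assume v: "v \<in> G" "gmul v ela = gmul ela v"
    obtain k where k: "v = gpow x0 k" using Ca[of v] v GV comm_iff by blast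
    show "gmul (gmul (ginv (gmul u u)) e0) (gmul (gmul (ginv (gmul v v)) elb) (gmul v v))
        = gmul (gmul (gmul (ginv (gmul v v)) elb) (gmul v v)) (gmul (ginv (gmul u u)) e0)"
      unfolding b k Cv_x0pow by (simp add: gmul_def fun_eq_iff Bfun_commute_bconj)
  qed
qed

definition tA :: gterm where "tA = GMul (GPar 0) (GPar 0)"
definition tB :: gterm where "tB = GMul (GMul (GMul (GPar 1) (GInv (GPar 0))) (GInv (GPar 1))) (GPar 0)"
definition tbeta :: gterm where "tbeta = GMul (GInv (GMul (GVar 1) (GVar 1))) (GVar 0)"
definition tC :: gterm where "tC = GMul (GMul (GInv (GMul (GVar 2) (GVar 2))) tB) (GMul (GVar 2) (GVar 2))"
definition phi :: gform where
  "phi = GEx 1 (GAnd (GEq (GMul (GVar 1) tA) (GMul tA (GVar 1)))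
           (GNot (GEx 2 (GAnd (GEq (GMul (GVar 2) tA) (GMul tA (GVar 2)))
                          (GNot (GEq (GMul tbeta tC) (GMul tC tbeta)))))))"
definition pars :: "nat \<Rightarrow> real \<Rightarrow> real" where "pars i = (if i = 1 then x1 else x0)"

lemma sat_phi: "sat G pars e phi \<longleftrightarrow>
  (\<exists>u\<in>G. gmul u ela = gmul ela u \<and>
           (\<forall>v\<in>G. gmul v ela = gmul ela v \<longrightarrow>
              gmul (gmul (ginv (gmul u u)) (e 0)) (gmul (gmul (ginv (gmul v v)) elb) (gmul v v))
            = gmul (gmul (gmul (ginv (gmul v v)) elb) (gmul v v)) (gmul (ginv (gmul u u)) (e 0))))"
  by (simp add: phi_def tA_def tB_def tbeta_def tC_def pars_def ela_def elb_def)

theorem proposition3p3: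
  shows "x0 \<in> thompsonF \<and> x1 \<in> thompsonF
    \<and> (\<forall>j k. gmul (bconj j) (bconj k) = gmul (bconj k) (bconj j))
    \<and> (\<forall>N m n. gmul (gpow ela m) (bprod N n) = id \<longrightarrow> m = 0 \<and> (\<forall>k \<in> {- N..N}. n k = 0))
    \<and> (\<forall>g \<in> gen_by {ela, elb}. \<exists>N m n. g = gmul (gpow ela m) (bprod N n))
    \<and> (\<exists>(\<phi>::gform) (ps::nat \<Rightarrow> real \<Rightarrow> real). (\<forall>i. ps i \<in> thompsonF) \<and>
        (\<forall>G \<in> {thompsonF, thompsonT, thompsonV}. \<forall>e. (\<forall>i. e i \<in> G) \<longrightarrow>
            (sat G ps e \<phi> \<longleftrightarrow> e 0 \<in> gen_by {ela, elb})))"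
proof (intro conjI)
  show "x0 \<in> thompsonF" by (rule x0_F)
  show "x1 \<in> thompsonF" by (rule x1_F)
  show "\<forall>j k. gmul (bconj j) (bconj k) = gmul (bconj k) (bconj j)" using part3 by blast
  show "\<forall>N m n. gmul (gpow ela m) (bprod N n) = id \<longrightarrow> m = 0 \<and> (\<forall>k \<in> {- N..N}. n k = 0)"
    using part4 by blast
  show "\<forall>g \<in> gen_by {ela, elb}. \<exists>N m n. g = gmul (gpow ela m) (bprod N n)"
    using part5 by blast
  show "\<exists>(\<phi>::gform) (ps::nat \<Rightarrow> real \<Rightarrow> real). (\<forall>i. ps i \<in> thompsonF) \<and>
        (\<forall>G \<in> {thompsonF, thompsonT, thompsonV}. \<forall>e. (\<forall>i. e i \<in> G) \<longrightarrow>
            (sat G ps e \<phi> \<longleftrightarrow> e 0 \<in> gen_by {ela, elb}))"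
  proof (intro exI[of _ phi] exI[of _ pars] conjI allI ballI impI)
    show "pars i \<in> thompsonF" for i by (simp add: pars_def x0_F x1_F)
    fix G and e :: "nat \<Rightarrow> real \<Rightarrow> real" assume G: "G \<in> {thompsonF, thompsonT, thompsonV}" and e: "\<forall>i. e i \<in> G"
    have GV: "G \<subseteq> thompsonV" using G by (auto simp: thompsonF_def thompsonT_def)
    have pw: "gpow x0 k \<in> G" for k using G x0pow_F x0pow_T x0pow_V by auto
    have "e 0 \<in> G" using e by blast
    show "sat G pars e phi \<longleftrightarrow> e 0 \<in> gen_by {ela, elb}"
      unfolding sat_phi by (rule main_equiv[OF GV pw \<open>e 0 \<in> G\<close>])
  qed
qed


end
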